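(* Let $n\ge 1$ and let $f,g\in O(n+1)\cong \mathbf I(\mathbb S^n)$. Then $\tilde\sigma_f=\tilde\sigma_g$ if and only if $f$ and $g$ have the same $O(n+1)$-orbit type, i.e. if and only if their centralizers $O(n+1)_f=\{h\in O(n+1): hf=fh\}$ and $O(n+1)_g$ are conjugate subgroups of $O(n+1)$.
   Context: The isometry group of the unit sphere $\mathbb S^n\subset\mathbb R^{n+1}$ is identified with $O(n+1)$, acting on itself by conjugation; two elements of a group have the same orbit type iff their isotropy groups (centralizers) are conjugate. Segre symbol of an orthogonal map: for $A\in O(m)$, $\tilde\sigma_A$ consists of (a) the multiset $\{n_1,\dots,n_s\}$ where $\{\lambda_1,\bar\lambda_1\},\dots,\{\lambda_s,\bar\lambda_s\}$ are the distinct pairs of non-real complex eigenvalues of $A$ and $n_i=\dim_{\mathbb C}\ker(A-\lambda_i)$, and (b) the multiset $\{m_1,m_2\}$ (possibly with fewer than two entries) of the numbers $\dim\ker(A-\varepsilon)$ for those $\varepsilon\in\{1,-1\}$ that are eigenvalues of $A$. It is written $[(n_1\bar n_1),\dots,(n_s\bar n_s),m_1,m_2]$ with $n_1\ge\dots\ge n_s$, $m_1\ge m_2$. Note that whether a given $m_i$ comes from eigenvalue $1$ or $-1$ is not recorded. *)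

theory Defs
  imports "HOL-Analysis.Analysis" "HOL-Library.Multiset"
begin

text \<open>The orthogonal group O(m), realised as orthogonal real m x m matrices
  (the dimension m is the cardinality of the finite index type 'n).\<close>
definition orth_group :: "(real^'n^'n) set" where
  "orth_group = {A. orthogonal_matrix A}"

definition centralizer_O :: "real^'n^'n \<Rightarrow> (real^'n^'n) set" where
  "centralizer_O f = {h \<in> orth_group. h ** f = f ** h}"

definition cmat :: "real^'n^'n \<Rightarrow> complex^'n^'n" where
  "cmat A = (\<chi> i j. complex_of_real (A $ i $ j))"

definition ceig_dim :: "real^'n^'n \<Rightarrow> complex \<Rightarrow> nat" where
  "ceig_dim A z = vec.dim {v :: complex^'n. cmat A *v v = z *s v}"

definition reig_dim :: "real^'n^'n \<Rightarrow> real \<Rightarrow> nat" where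
  "reig_dim A e = vec.dim {v :: real^'n. A *v v = e *s v}"

text \<open>Non-real complex eigenvalues, one representative (positive imaginary part)
  of each conjugate pair.\<close>
definition nonreal_eig_reps :: "real^'n^'n \<Rightarrow> complex set" where
  "nonreal_eig_reps A = {z. Im z > 0 \<and> (\<exists>v :: complex^'n. v \<noteq> 0 \<and> cmat A *v v = z *s v)}"

definition pm1_eigs :: "real^'n^'n \<Rightarrow> real set" where
  "pm1_eigs A = {e \<in> {1, -1}. \<exists>v :: real^'n. v \<noteq> 0 \<and> A *v v = e *s v}"

text \<open>Segre symbol: the multiset of the n_i and the multiset of the m_j
  (sorting/writing convention is irrelevant for equality of multisets).\<close>
definition segre :: "real^'n^'n \<Rightarrow> nat multiset \<times> nat multiset" where
  "segre A = (image_mset (ceig_dim A) (mset_set (nonreal_eig_reps A)),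
              image_mset (reig_dim A) (mset_set (pm1_eigs A)))"

end

theory Submission
  imports Defs
begin

lemma sym_eigvec:
  fixes s :: "'a::euclidean_space \<Rightarrow> 'a" and U :: "'a set"
  assumes lin: "linear s" and sym: "\<And>x y. s x \<bullet> y = x \<bullet> s y"
    and U: "subspace U" and inv: "\<And>x. x \<in> U \<Longrightarrow> s x \<in> U" and ne: "U \<noteq> {0}"
  shows "\<exists>x\<in>U. x \<noteq> 0 \<and> (\<exists>l. s x = l *\<^sub>R x)"
proof -
  define K where "K = U \<inter> sphere 0 1"
  have "compact K" unfolding K_def
    by (simp add: U closed_subspace closed_Int_compact)
  obtain u where uU: "u \<in> U" "u \<noteq> 0" using ne U subspace_0 by blast
  have "u /\<^sub>R norm u \<in> K" using uU U by (simp add: K_def subspace_scale)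
  then have "K \<noteq> {}" by blast
  have cont: "continuous_on K (\<lambda>x. x \<bullet> s x)"
    using lin linear_conv_bounded_linear by (intro continuous_intros linear_continuous_on) auto
  obtain x0 where x0K: "x0 \<in> K" and mx: "\<And>y. y \<in> K \<Longrightarrow> y \<bullet> s y \<le> x0 \<bullet> s x0"
    using continuous_attains_sup[OF \<open>compact K\<close> \<open>K \<noteq> {}\<close> cont] by blast
  define l where "l = x0 \<bullet> s x0"
  have x0U: "x0 \<in> U" and nx0: "norm x0 = 1" using x0K by (auto simp: K_def)
  have xx: "x0 \<bullet> x0 = 1" using nx0 by (simp add: dot_square_norm)
  have hom: "z \<bullet> s z \<le> l * (z \<bullet> z)" if "z \<in> U" for z
  proof (cases "z = 0")
    case True then show ?thesis using lin by (simp add: linear_0)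
  next
    case False
    then have "z /\<^sub>R norm z \<in> K" using that U by (simp add: K_def subspace_scale)
    then have "(z /\<^sub>R norm z) \<bullet> s (z /\<^sub>R norm z) \<le> l" using mx l_def by blast
    then have "(z \<bullet> s z) / (norm z)^2 \<le> l"
      using lin by (simp add: linear_scale inner_commute power2_eq_square divide_inverse mult.commute mult.left_commute)
    then show ?thesis using False by (simp add: divide_le_eq dot_square_norm)
  qed
  define y where "y = s x0 - l *\<^sub>R x0"
  have yU: "y \<in> U" unfolding y_def using x0U inv U by (simp add: subspace_diff subspace_scale)
  have x0y: "x0 \<bullet> y = 0" unfolding y_def l_def using xx
    by (simp add: inner_diff_right)
  have ysx: "y \<bullet> s x0 = y \<bullet> y"
  proof -
    have "y \<bullet> y = y \<bullet> (s x0 - l *\<^sub>R x0)" by (simp add: y_def)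
    also have "\<dots> = y \<bullet> s x0 - l * (y \<bullet> x0)" by (simp add: inner_diff_right)
    also have "y \<bullet> x0 = 0" using x0y by (simp add: inner_commute)
    finally show ?thesis by simp
  qed
  have ineq: "2 * t * (y \<bullet> y) \<le> t^2 * (l * (y \<bullet> y) - y \<bullet> s y)" if "t > 0" for t
  proof -
    have "x0 + t *\<^sub>R y \<in> U" using x0U yU U by (simp add: subspace_add subspace_scale)
    then have h: "(x0 + t *\<^sub>R y) \<bullet> s (x0 + t *\<^sub>R y) \<le> l * ((x0 + t *\<^sub>R y) \<bullet> (x0 + t *\<^sub>R y))"
      by (rule hom)
    have e1: "(x0 + t *\<^sub>R y) \<bullet> s (x0 + t *\<^sub>R y) = l + 2 * t * (y \<bullet> y) + t^2 * (y \<bullet> s y)"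
    proof -
      have "s (x0 + t *\<^sub>R y) = s x0 + t *\<^sub>R s y" using lin by (simp add: linear_add linear_scale)
      moreover have "x0 \<bullet> s y = y \<bullet> s x0" using sym[of y x0] by (simp add: inner_commute)
      ultimately show ?thesis using ysx l_def
        by (simp add: inner_add_left inner_add_right power2_eq_square algebra_simps)
    qed
    have e2: "(x0 + t *\<^sub>R y) \<bullet> (x0 + t *\<^sub>R y) = 1 + t^2 * (y \<bullet> y)"
      using x0y xx by (simp add: inner_add_left inner_add_right inner_commute power2_eq_square algebra_simps)
    show ?thesis using h unfolding e1 e2 by (simp add: algebra_simps)
  qed
  have "y \<bullet> y = 0"
  proof (rule ccontr)
    assume nz: "y \<bullet> y \<noteq> 0"
    then have pos: "y \<bullet> y > 0" by (simp add: order_less_le)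
    define M where "M = \<bar>l * (y \<bullet> y) - y \<bullet> s y\<bar> + 1"
    have Mpos: "M > 0" unfolding M_def by simp
    define t where "t = (y \<bullet> y) / M"
    have tpos: "t > 0" using pos Mpos by (simp add: t_def)
    have "2 * t * (y \<bullet> y) \<le> t^2 * M"
      using ineq[OF tpos] tpos unfolding M_def
      by (smt (verit) mult_left_mono power2_eq_square zero_le_power2 abs_ge_self)
    then have "2 * (y \<bullet> y) \<le> t * M" using tpos by (simp add: power2_eq_square algebra_simps)
    also have "t * M = y \<bullet> y" using Mpos by (simp add: t_def)
    finally show False using pos by simp
  qed
  then have "s x0 = l *\<^sub>R x0" by (simp add: y_def)
  then show ?thesis using x0U nx0 by (intro bexI[of _ x0]) auto
qed

definition oproj :: "'a::euclidean_space set \<Rightarrow> 'a \<Rightarrow> 'a" where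
  "oproj W x = (SOME p. p \<in> W \<and> (\<forall>w\<in>W. (x - p) \<bullet> w = 0))"

lemma oproj:
  assumes "subspace W"
  shows "oproj W x \<in> W" "\<And>w. w \<in> W \<Longrightarrow> (x - oproj W x) \<bullet> w = 0"
proof -
  obtain y z where "y \<in> span W" "\<And>w. w \<in> span W \<Longrightarrow> orthogonal z w" "x = y + z"
    using orthogonal_subspace_decomp_exists by blast
  moreover have sW: "span W = W" using assms by (simp add: span_eq_iff)
  ultimately have "\<exists>p. p \<in> W \<and> (\<forall>w\<in>W. (x - p) \<bullet> w = 0)"
    by (intro exI[of _ y]) (auto simp: orthogonal_def)
  then have "oproj W x \<in> W \<and> (\<forall>w\<in>W. (x - oproj W x) \<bullet> w = 0)"
    unfolding oproj_def by (rule someI_ex)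
  then show "oproj W x \<in> W" "\<And>w. w \<in> W \<Longrightarrow> (x - oproj W x) \<bullet> w = 0" by auto
qed

lemma oproj_unique:
  assumes W: "subspace W" and p: "p \<in> W" and o: "\<And>w. w \<in> W \<Longrightarrow> (x - p) \<bullet> w = 0"
  shows "oproj W x = p"
proof -
  have d: "oproj W x - p \<in> W" using oproj(1)[OF W] p W by (simp add: subspace_diff)
  have "(oproj W x - p) \<bullet> (oproj W x - p) = (x - p) \<bullet> (oproj W x - p) - (x - oproj W x) \<bullet> (oproj W x - p)"
    by (simp add: inner_diff_left)
  also have "\<dots> = 0" using o[OF d] oproj(2)[OF W d] by simp
  finally show ?thesis by simp
qed

lemma oproj_id: "subspace W \<Longrightarrow> x \<in> W \<Longrightarrow> oproj W x = x"
  by (rule oproj_unique) auto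

lemma oproj_zero: "subspace W \<Longrightarrow> (\<And>w. w \<in> W \<Longrightarrow> x \<bullet> w = 0) \<Longrightarrow> oproj W x = 0"
  by (rule oproj_unique) (auto simp: subspace_0)

lemma oproj_linear: assumes W: "subspace W" shows "linear (oproj W)"
proof (rule linearI)
  fix x y
  show "oproj W (x + y) = oproj W x + oproj W y"
  proof (rule oproj_unique[OF W])
    show "oproj W x + oproj W y \<in> W" using W oproj(1)[OF W] by (simp add: subspace_add)
    fix w assume "w \<in> W"
    then have "(x - oproj W x) \<bullet> w = 0" "(y - oproj W y) \<bullet> w = 0" by (auto intro: oproj(2)[OF W])
    then show "(x + y - (oproj W x + oproj W y)) \<bullet> w = 0"
      by (simp add: inner_diff_left inner_add_left)
  qed
next
  fix r x
  show "oproj W (r *\<^sub>R x) = r *\<^sub>R oproj W x"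
  proof (rule oproj_unique[OF W])
    show "r *\<^sub>R oproj W x \<in> W" using W oproj(1)[OF W] by (simp add: subspace_scale)
    fix w assume "w \<in> W"
    then have "(x - oproj W x) \<bullet> w = 0" by (rule oproj(2)[OF W])
    then show "(r *\<^sub>R x - r *\<^sub>R oproj W x) \<bullet> w = 0"
      by (metis inner_scaleR_left mult_zero_right scaleR_right_diff_distrib)
  qed
qed

lemma oproj_orth: "subspace W \<Longrightarrow> w \<in> W \<Longrightarrow> oproj W x \<bullet> w = x \<bullet> w"
  using oproj(2)[of W w x] by (simp add: inner_diff_left)

declare transpose_matrix_vector[simp del]

locale om =
  fixes f :: "real^'n^'n"
  assumes orth: "orthogonal_matrix f"
begin

abbreviation F where "F x \<equiv> f *v x"
abbreviation FT where "FT x \<equiv> transpose f *v x"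

definition W :: "real \<Rightarrow> (real^'n) set" where
  "W c = {v. F v + FT v = c *\<^sub>R v}"

definition cs :: "real set" where "cs = {c. W c \<noteq> {0}}"

lemma FT_F[simp]: "FT (F x) = x"
  using orth unfolding orthogonal_matrix_def
  by (metis matrix_vector_mul_assoc matrix_vector_mul_lid)

lemma F_FT[simp]: "F (FT x) = x"
  using orth unfolding orthogonal_matrix_def
  by (metis matrix_vector_mul_assoc matrix_vector_mul_lid)

lemma F_adj: "F x \<bullet> y = x \<bullet> FT y"
  by (metis dot_lmul_matrix inner_commute transpose_matrix_vector)

lemma F_inner[simp]: "F x \<bullet> F y = x \<bullet> y"
  by (simp only: F_adj FT_F)

lemma F_norm[simp]: "norm (F x) = norm x"
  by (simp add: norm_eq_sqrt_inner)

lemma linF: "linear F" by (simp add: matrix_vector_mul_linear)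
lemma linFT: "linear FT" by (simp add: matrix_vector_mul_linear)

lemma FT_adj: "FT x \<bullet> y = x \<bullet> F y"
  using F_adj[of y x] by (simp add: inner_commute)

lemma S_sym: "(F x + FT x) \<bullet> y = x \<bullet> (F y + FT y)"
  by (simp add: inner_add_left inner_add_right F_adj FT_adj)

lemma W_sub: "subspace (W c)"
  unfolding W_def subspace_def
  apply (simp add: matrix_vector_right_distrib matrix_vector_mult_scaleR scaleR_right_distrib algebra_simps)
  by (metis scaleR_right_distrib scaleR_scaleR)

lemma W_F: "x \<in> W c \<Longrightarrow> F x \<in> W c"
proof -
  assume "x \<in> W c"
  then have "F x + FT x = c *\<^sub>R x" by (simp add: W_def)
  then have "F (F x + FT x) = c *\<^sub>R F x" by (simp add: matrix_vector_mult_scaleR)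
  then show "F x \<in> W c" by (simp add: W_def matrix_vector_right_distrib add.commute)
qed

lemma W_FT_eq: "x \<in> W c \<Longrightarrow> FT x = c *\<^sub>R x - F x"
  by (simp add: W_def algebra_simps)

lemma W_FF: "x \<in> W c \<Longrightarrow> F (F x) = c *\<^sub>R F x - x"
proof -
  assume x: "x \<in> W c"
  have "F x \<in> W c" using W_F x .
  then have "FT (F x) = c *\<^sub>R F x - F (F x)" by (rule W_FT_eq)
  then have "x = c *\<^sub>R F x - F (F x)" by simp
  then show ?thesis by (metis add_diff_cancel_left' diff_add_cancel)
qed

lemma W_FT: "x \<in> W c \<Longrightarrow> FT x \<in> W c"
  using W_FT_eq W_F W_sub by (metis subspace_diff subspace_scale)

lemma W_dot: "x \<in> W c \<Longrightarrow> 2 * (F x \<bullet> x) = c * (x \<bullet> x)"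
proof -
  assume x: "x \<in> W c"
  have "(F x + FT x) \<bullet> x = c * (x \<bullet> x)" using x by (simp add: W_def)
  moreover have "FT x \<bullet> x = F x \<bullet> x" by (metis F_adj inner_commute)
  ultimately show ?thesis by (simp add: inner_add_left)
qed

lemma W_orth: "x \<in> W c \<Longrightarrow> y \<in> W d \<Longrightarrow> c \<noteq> d \<Longrightarrow> x \<bullet> y = 0"
proof -
  assume x: "x \<in> W c" and y: "y \<in> W d" and cd: "c \<noteq> d"
  have "(F x + FT x) \<bullet> y = x \<bullet> (F y + FT y)" by (rule S_sym)
  then have "c * (x \<bullet> y) = d * (x \<bullet> y)" using x y by (simp add: W_def)
  then show ?thesis using cd by simp
qed

lemma W_bound: "x \<in> W c \<Longrightarrow> x \<noteq> 0 \<Longrightarrow> \<bar>c\<bar> \<le> 2"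
proof -
  assume x: "x \<in> W c" "x \<noteq> 0"
  have "\<bar>F x \<bullet> x\<bar> \<le> norm (F x) * norm x" by (rule Cauchy_Schwarz_ineq2)
  then have "\<bar>F x \<bullet> x\<bar> \<le> x \<bullet> x" by (simp add: dot_square_norm power2_eq_square)
  moreover have "x \<bullet> x > 0" using x by simp
  ultimately have p: "x \<bullet> x > 0" and q: "\<bar>F x \<bullet> x\<bar> \<le> x \<bullet> x" by auto
  have "\<bar>c\<bar> * (x \<bullet> x) = \<bar>c * (x \<bullet> x)\<bar>" using p by (simp add: abs_mult)
  also have "\<dots> = 2 * \<bar>F x \<bullet> x\<bar>" using W_dot[OF x(1)] by (metis abs_mult abs_numeral)
  also have "\<dots> \<le> 2 * (x \<bullet> x)" using q by simp
  finally show ?thesis using p by simp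
qed

lemma W_2: "W 2 = {x. F x = x}"
proof safe
  fix x assume x: "x \<in> W 2"
  have "(F x - x) \<bullet> (F x - x) = F x \<bullet> F x - 2 * (F x \<bullet> x) + x \<bullet> x"
    by (simp add: inner_diff_left inner_diff_right inner_commute)
  also have "\<dots> = 0" using W_dot[OF x] by simp
  finally show "F x = x" by simp
next
  fix x assume "F x = x"
  then have "FT x = x" by (metis FT_F)
  then show "x \<in> W 2" using \<open>F x = x\<close> by (simp add: W_def scaleR_2)
qed

lemma W_m2: "W (-2) = {x. F x = - x}"
proof safe
  fix x assume x: "x \<in> W (-2)"
  have "(F x + x) \<bullet> (F x + x) = F x \<bullet> F x + 2 * (F x \<bullet> x) + x \<bullet> x"
    by (simp add: inner_add_left inner_add_right inner_commute)
  also have "\<dots> = 0" using W_dot[OF x] by simp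
  finally have "F x + x = 0" by simp
  then show "F x = - x" by (simp add: eq_neg_iff_add_eq_0)
next
  fix x assume "F x = - x"
  then have "x = FT (- x)" using FT_F[of x] by simp
  then have "FT x = - x" using linear_neg[OF linFT, of x] by (metis minus_minus)
  then show "x \<in> W (-2)" using \<open>F x = - x\<close> by (simp add: W_def scaleR_2)
qed

lemma spectral_orth:
  assumes "\<And>c w. w \<in> W c \<Longrightarrow> x \<bullet> w = 0"
  shows "x = 0"
proof (rule ccontr)
  assume x0: "x \<noteq> 0"
  define U where "U = {x. \<forall>c. \<forall>w\<in>W c. x \<bullet> w = 0}"
  have U: "subspace U" unfolding U_def subspace_def by (auto simp: inner_add_left)
  have inv: "F y + FT y \<in> U" if "y \<in> U" for y
    using that unfolding U_def
    by (auto simp: S_sym W_def)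
  have "x \<in> U" using assms by (auto simp: U_def)
  then have "U \<noteq> {0}" using x0 by auto
  then obtain y l where y: "y \<in> U" "y \<noteq> 0" "F y + FT y = l *\<^sub>R y"
    using sym_eigvec[of "\<lambda>y. F y + FT y" U] U inv linF linFT S_sym
    by (auto intro: linear_compose_add)
  then have "y \<in> W l" by (simp add: W_def)
  then have "y \<bullet> y = 0" using y(1) by (auto simp: U_def)
  then show False using y(2) by simp
qed

lemma cs_bound: "c \<in> cs \<Longrightarrow> \<bar>c\<bar> \<le> 2"
  unfolding cs_def using W_sub subspace_0 W_bound by blast

lemma finite_cs: "finite cs"
proof -
  have "\<forall>c\<in>cs. \<exists>v. v \<in> W c \<and> v \<noteq> 0" unfolding cs_def using W_sub subspace_0 by blast
  then obtain v where v: "\<And>c. c \<in> cs \<Longrightarrow> v c \<in> W c \<and> v c \<noteq> 0" by metis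
  have inj: "inj_on v cs"
  proof (rule inj_onI)
    fix c d assume cd: "c \<in> cs" "d \<in> cs" "v c = v d"
    show "c = d"
    proof (rule ccontr)
      assume "c \<noteq> d"
      then have "v c \<bullet> v d = 0" using v cd W_orth by blast
      then show False using cd v by simp
    qed
  qed
  have "pairwise orthogonal (v ` cs)"
  proof (clarsimp simp: pairwise_def orthogonal_def)
    fix c d assume "c \<in> cs" "d \<in> cs" "v c \<noteq> v d"
    then have "c \<noteq> d" by auto
    then show "v c \<bullet> v d = 0" using v \<open>c \<in> cs\<close> \<open>d \<in> cs\<close> W_orth by blast
  qed
  moreover have "0 \<notin> v ` cs" using v by auto
  ultimately have "independent (v ` cs)" by (rule pairwise_orthogonal_independent)
  then have "finite (v ` cs)" using independent_bound_general by blast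
  then show ?thesis using inj finite_imageD by blast
qed

lemma decomp: "x = (\<Sum>c\<in>cs. oproj (W c) x)"
proof -
  define y where "y = x - (\<Sum>c\<in>cs. oproj (W c) x)"
  have "y \<bullet> w = 0" if w: "w \<in> W d" for d w
  proof (cases "d \<in> cs")
    case False then have "w = 0" using w by (auto simp: cs_def W_sub subspace_0)
    then show ?thesis by simp
  next
    case True
    have "(\<Sum>c\<in>cs. oproj (W c) x) \<bullet> w = (\<Sum>c\<in>cs. oproj (W c) x \<bullet> w)" by (simp add: inner_sum_left)
    also have "\<dots> = (\<Sum>c\<in>cs. if c = d then x \<bullet> w else 0)"
      by (rule sum.cong) (auto simp: oproj_orth W_sub w intro!: W_orth[OF oproj(1)[OF W_sub] w])
    also have "\<dots> = x \<bullet> w" using True finite_cs by simp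
    finally show ?thesis by (simp add: y_def inner_diff_left)
  qed
  then have "y = 0" by (intro spectral_orth) auto
  then show ?thesis by (simp add: y_def)
qed

end

context om begin

definition bb :: "real \<Rightarrow> real" where "bb c = sqrt (1 - (c/2)^2)"
definition J :: "real \<Rightarrow> real^'n \<Rightarrow> real^'n" where
  "J c x = (1 / bb c) *\<^sub>R (F x - (c/2) *\<^sub>R x)"

lemma bb_pos: "\<bar>c\<bar> < 2 \<Longrightarrow> bb c > 0"
proof -
  assume "\<bar>c\<bar> < 2"
  then have "\<bar>c/2\<bar> < 1" by simp
  then have "(c/2)^2 < 1" by (simp only: abs_square_less_1)
  then show ?thesis by (simp add: bb_def)
qed

lemma bb_sq: "\<bar>c\<bar> < 2 \<Longrightarrow> bb c * bb c = 1 - (c/2)^2"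
proof -
  assume c: "\<bar>c\<bar> < 2"
  have "0 \<le> 1 - (c/2)^2" using bb_pos[OF c] by (simp add: bb_def)
  then show ?thesis by (simp add: bb_def)
qed

lemma J_lin: "linear (J c)"
  by (rule linearI) (simp_all add: J_def matrix_vector_right_distrib matrix_vector_mult_scaleR algebra_simps)

lemma bJ: "\<bar>c\<bar> < 2 \<Longrightarrow> bb c *\<^sub>R J c x = F x - (c/2) *\<^sub>R x"
  using bb_pos[of c] by (simp add: J_def)

lemma F_J: "\<bar>c\<bar> < 2 \<Longrightarrow> F x = (c/2) *\<^sub>R x + bb c *\<^sub>R J c x"
  using bJ[of c x] by simp

lemma J_W: "x \<in> W c \<Longrightarrow> J c x \<in> W c"
  unfolding J_def using W_sub W_F by (metis subspace_diff subspace_scale)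

lemma J_J: assumes c: "\<bar>c\<bar> < 2" and x: "x \<in> W c" shows "J c (J c x) = - x"
proof -
  define b where "b = bb c"
  define a where "a = c/2"
  have e1: "b *\<^sub>R J c x = F x - a *\<^sub>R x" using bJ[OF c] by (simp add: a_def b_def)
  have e2: "b *\<^sub>R J c (J c x) = F (J c x) - a *\<^sub>R J c x" using bJ[OF c] by (simp add: a_def b_def)
  have "(b * b) *\<^sub>R J c (J c x) = b *\<^sub>R (F (J c x) - a *\<^sub>R J c x)" using e2 by (metis scaleR_scaleR)
  also have "\<dots> = F (b *\<^sub>R J c x) - a *\<^sub>R (b *\<^sub>R J c x)"
    by (simp add: algebra_simps)
  also have "\<dots> = F (F x) - a *\<^sub>R F x - a *\<^sub>R F x + (a*a) *\<^sub>R x"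
    unfolding e1 by (simp add: matrix_vector_mult_diff_distrib matrix_vector_mult_scaleR scaleR_diff_right)
  also have "\<dots> = (c - a - a) *\<^sub>R F x + (a * a - 1) *\<^sub>R x"
    unfolding W_FF[OF x] by (simp add: vec_eq_iff algebra_simps)
  also have "c - a - a = 0" by (simp add: a_def)
  also have "a * a - 1 = - (b * b)" using bb_sq[OF c] by (simp add: a_def b_def power2_eq_square)
  finally have "(b * b) *\<^sub>R J c (J c x) = (b * b) *\<^sub>R (- x)" by simp
  moreover have "b * b \<noteq> 0" using bb_pos[OF c] by (simp add: b_def)
  ultimately show ?thesis by (metis scaleR_cancel_left)
qed

lemma FxWy: "x \<in> W c \<Longrightarrow> y \<in> W c \<Longrightarrow> F x \<bullet> y + x \<bullet> F y = c * (x \<bullet> y)"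
proof -
  assume x: "x \<in> W c" and y: "y \<in> W c"
  have "F x \<bullet> y = x \<bullet> FT y" by (rule F_adj)
  then have "F x \<bullet> y + x \<bullet> F y = x \<bullet> (F y + FT y)" by (simp add: inner_add_right)
  also have "\<dots> = c * (x \<bullet> y)" using y by (simp add: W_def)
  finally show ?thesis .
qed

lemma J_inner: assumes c: "\<bar>c\<bar> < 2" and x: "x \<in> W c" and y: "y \<in> W c"
  shows "J c x \<bullet> J c y = x \<bullet> y"
proof -
  define b where "b = bb c"
  define a where "a = c/2"
  have "(b*b) * (J c x \<bullet> J c y) = (b *\<^sub>R J c x) \<bullet> (b *\<^sub>R J c y)" by simp
  also have "\<dots> = (F x - a *\<^sub>R x) \<bullet> (F y - a *\<^sub>R y)" using bJ[OF c] by (simp add: a_def b_def)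
  also have "\<dots> = F x \<bullet> F y - a * (F x \<bullet> y + x \<bullet> F y) + a*a * (x \<bullet> y)"
    by (simp add: inner_diff_left inner_diff_right algebra_simps)
  also have "\<dots> = (1 - a*a) * (x \<bullet> y)" using FxWy[OF x y] by (simp add: a_def algebra_simps)
  also have "1 - a*a = b*b" using bb_sq[OF c] by (simp add: a_def b_def power2_eq_square)
  finally show ?thesis using bb_pos[OF c] by (simp add: b_def)
qed

lemma J_norm: "\<bar>c\<bar> < 2 \<Longrightarrow> x \<in> W c \<Longrightarrow> norm (J c x) = norm x"
  using J_inner by (simp add: norm_eq_sqrt_inner)

lemma J_skew: assumes c: "\<bar>c\<bar> < 2" and x: "x \<in> W c" and y: "y \<in> W c"
  shows "J c x \<bullet> y = - (x \<bullet> J c y)"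
proof -
  define b where "b = bb c"
  define a where "a = c/2"
  have "b * (J c x \<bullet> y) + b * (x \<bullet> J c y) = (b *\<^sub>R J c x) \<bullet> y + x \<bullet> (b *\<^sub>R J c y)" by simp
  also have "\<dots> = (F x - a *\<^sub>R x) \<bullet> y + x \<bullet> (F y - a *\<^sub>R y)" using bJ[OF c] by (simp add: a_def b_def)
  also have "\<dots> = (F x \<bullet> y + x \<bullet> F y) - 2 * a * (x \<bullet> y)"
    by (simp add: inner_diff_left inner_diff_right algebra_simps)
  also have "\<dots> = 0" using FxWy[OF x y] by (simp add: a_def)
  finally have "b * (J c x \<bullet> y + x \<bullet> J c y) = 0" by (simp add: algebra_simps)
  then show ?thesis using bb_pos[OF c] by (simp add: b_def)
qed

lemma J_self: "\<bar>c\<bar> < 2 \<Longrightarrow> x \<in> W c \<Longrightarrow> J c x \<bullet> x = 0"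
  using J_skew[of c x x] by (simp add: inner_commute)

lemma no_real_eig: assumes c: "\<bar>c\<bar> < 2" and x: "x \<in> W c" and e: "F x = m *\<^sub>R x"
  shows "x = 0"
proof (rule ccontr)
  assume x0: "x \<noteq> 0"
  have "norm x = \<bar>m\<bar> * norm x" using e F_norm[of x] by simp
  then have "\<bar>m\<bar> = 1" using x0 by simp
  then have "m = 1 \<or> m = -1" by auto
  then have "x \<in> W 2 \<or> x \<in> W (-2)" using e by (auto simp: W_2 W_m2)
  moreover have "c \<noteq> 2" "c \<noteq> -2" using c by auto
  ultimately have "x \<bullet> x = 0" using W_orth x by blast
  then show False using x0 by simp
qed

subsection \<open>Characterisation of the commutant\<close>

lemma comm_FT: assumes "\<And>x. H (F x) = F (H x)" shows "H (FT x) = FT (H x)"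
proof -
  have "H x = H (F (FT x))" by simp
  also have "\<dots> = F (H (FT x))" by (rule assms)
  finally have "FT (H x) = FT (F (H (FT x)))" by simp
  then show ?thesis by simp
qed

lemma comm_W: assumes H: "linear H" and cm: "\<And>x. H (F x) = F (H x)" and x: "x \<in> W c"
  shows "H x \<in> W c"
proof -
  have "FT (H x) = H (FT x)" using comm_FT[of H x] cm by simp
  then have "F (H x) + FT (H x) = H (F x + FT x)" using cm linear_add[OF H] by simp
  also have "\<dots> = c *\<^sub>R H x" using x linear_scale[OF H] by (simp add: W_def)
  finally show ?thesis by (simp add: W_def)
qed

lemma comm_of_blocks:
  assumes H: "linear H" and bl: "\<And>c x. c \<in> cs \<Longrightarrow> x \<in> W c \<Longrightarrow> H x \<in> W c \<and> H (F x) = F (H x)"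
  shows "H (F x) = F (H x)"
proof -
  have dx: "x = (\<Sum>c\<in>cs. oproj (W c) x)" by (rule decomp)
  have "H (F x) = (\<Sum>c\<in>cs. H (F (oproj (W c) x)))"
    by (subst dx) (simp add: linear_sum[OF H] linear_sum[OF linF] o_def)
  also have "\<dots> = (\<Sum>c\<in>cs. F (H (oproj (W c) x)))"
    using bl oproj(1)[OF W_sub] by (intro sum.cong) auto
  also have "\<dots> = F (H x)"
    by (subst (2) dx) (simp add: linear_sum[OF H] linear_sum[OF linF] o_def)
  finally show ?thesis .
qed

lemma comm_block_J:
  assumes c: "\<bar>c\<bar> < 2" and H: "linear H" and pres: "\<And>x. x \<in> W c \<Longrightarrow> H x \<in> W c"
  shows "(\<forall>x\<in>W c. H (F x) = F (H x)) \<longleftrightarrow> (\<forall>x\<in>W c. H (J c x) = J c (H x))"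
proof -
  have "H (F x) = F (H x) \<longleftrightarrow> H (J c x) = J c (H x)" if x: "x \<in> W c" for x
  proof -
    have "H (F x) = (c/2) *\<^sub>R H x + bb c *\<^sub>R H (J c x)"
      using F_J[OF c, of x] linear_add[OF H] linear_scale[OF H] by simp
    moreover have "F (H x) = (c/2) *\<^sub>R H x + bb c *\<^sub>R J c (H x)" by (rule F_J[OF c])
    ultimately show ?thesis using bb_pos[OF c] by auto
  qed
  then show ?thesis by auto
qed

lemma comm_block_real:
  assumes c: "c \<in> cs" "\<not> \<bar>c\<bar> < 2" and x: "x \<in> W c" and H: "linear H" and Hx: "H x \<in> W c"
  shows "H (F x) = F (H x)"
proof -
  have "\<bar>c\<bar> = 2" using cs_bound c by fastforce
  then have "c = 2 \<or> c = -2" by auto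
  then show ?thesis
  proof
    assume "c = 2" then show ?thesis using x Hx by (simp add: W_2)
  next
    assume "c = -2" then show ?thesis using x Hx linear_neg[OF H] by (simp add: W_m2)
  qed
qed

definition blk_ok :: "(real^'n \<Rightarrow> real^'n) \<Rightarrow> real \<Rightarrow> bool" where
  "blk_ok H c \<longleftrightarrow> (\<forall>x\<in>W c. H x \<in> W c \<and> (\<bar>c\<bar> < 2 \<longrightarrow> H (J c x) = J c (H x)))"

lemma comm_iff: assumes H: "linear H"
  shows "(\<forall>x. H (F x) = F (H x)) \<longleftrightarrow> (\<forall>c\<in>cs. blk_ok H c)"
proof
  assume cm: "\<forall>x. H (F x) = F (H x)"
  show "\<forall>c\<in>cs. blk_ok H c"
  proof (intro ballI)
    fix c assume "c \<in> cs"
    have pres: "\<And>x. x \<in> W c \<Longrightarrow> H x \<in> W c" using comm_W[OF H] cm by blast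
    show "blk_ok H c" unfolding blk_ok_def
      using pres comm_block_J[OF _ H pres] cm by blast
  qed
next
  assume bl: "\<forall>c\<in>cs. blk_ok H c"
  have "H x \<in> W c \<and> H (F x) = F (H x)" if "c \<in> cs" "x \<in> W c" for c x
  proof -
    have pres: "\<And>x. x \<in> W c \<Longrightarrow> H x \<in> W c" using bl that(1) by (auto simp: blk_ok_def)
    show ?thesis
    proof (cases "\<bar>c\<bar> < 2")
      case True
      then have "\<forall>x\<in>W c. H (J c x) = J c (H x)" using bl that(1) by (auto simp: blk_ok_def)
      then show ?thesis using comm_block_J[OF True H pres] pres that by blast
    next
      case False
      then show ?thesis using comm_block_real[OF that(1) False that(2) H pres[OF that(2)]] pres that by blast
    qed
  qed
  then show "\<forall>x. H (F x) = F (H x)" using comm_of_blocks[OF H] by blast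
qed

end

definition rf :: "real^'n \<Rightarrow> real^'n \<Rightarrow> real^'n" where
  "rf v z = z - (z \<bullet> v) *\<^sub>R v"

lemma rf_lin: "linear (rf v)"
  by (rule linearI) (simp_all add: rf_def inner_add_left algebra_simps)

lemma rf_orth: assumes "v \<bullet> v = 2" shows "orthogonal_transformation (rf v)"
proof -
  have "norm (rf v z) = norm z" for z
  proof -
    have "rf v z \<bullet> rf v z = z \<bullet> z" using assms
      by (simp add: rf_def inner_diff_left inner_diff_right inner_commute algebra_simps power2_eq_square)
    then show ?thesis by (simp add: norm_eq_sqrt_inner)
  qed
  then show ?thesis using rf_lin by (simp add: orthogonal_transformation)
qed

context om begin

lemma cent_iff: assumes "linear h"
  shows "matrix h \<in> centralizer_O f \<longleftrightarrow> orthogonal_transformation h \<and> (\<forall>x. h (F x) = F (h x))"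
proof -
  have mh: "\<And>x. matrix h *v x = h x" using assms matrix_vector_mul(2) by metis
  have "orthogonal_matrix (matrix h) \<longleftrightarrow> orthogonal_transformation h"
    using assms by (simp add: orthogonal_transformation_matrix)
  moreover have "matrix h ** f = f ** matrix h \<longleftrightarrow> (\<forall>x. h (F x) = F (h x))"
    by (simp add: matrix_eq matrix_vector_mul_assoc[symmetric] mh)
  ultimately show ?thesis by (simp add: centralizer_O_def orth_group_def)
qed

lemma F_orth: "orthogonal_transformation F"
  by (simp add: orthogonal_transformation)

definition crf :: "real \<Rightarrow> real^'n \<Rightarrow> real^'n \<Rightarrow> real^'n" where
  "crf c u z = z - ((z \<bullet> u) *\<^sub>R u + (z \<bullet> J c u) *\<^sub>R J c u)"

lemma crf_lin: "linear (crf c u)"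
  by (rule linearI) (simp_all add: crf_def inner_add_left algebra_simps)

lemma crf_orth: assumes c: "\<bar>c\<bar> < 2" and u: "u \<in> W c" and uu: "u \<bullet> u = 2"
  shows "orthogonal_transformation (crf c u)"
proof -
  have j1: "u \<bullet> J c u = 0" using J_self[OF c u] by (simp add: inner_commute)
  have j2: "J c u \<bullet> J c u = 2" using J_inner[OF c u u] uu by simp
  have "norm (crf c u z) = norm z" for z
  proof -
    have "crf c u z \<bullet> crf c u z = z \<bullet> z" using uu j1 j2
      by (simp add: crf_def inner_diff_left inner_diff_right inner_add_left inner_add_right
          inner_commute algebra_simps power2_eq_square)
    then show ?thesis by (simp add: norm_eq_sqrt_inner)
  qed
  then show ?thesis using crf_lin by (simp add: orthogonal_transformation)
qed

lemma crf_comm: assumes c: "\<bar>c\<bar> < 2" and u: "u \<in> W c"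
  shows "crf c u (F z) = F (crf c u z)"
proof -
  define a where "a = c/2"
  define b where "b = bb c"
  define v where "v = J c u"
  have Fu: "F u = a *\<^sub>R u + b *\<^sub>R v" using F_J[OF c] by (simp add: a_def b_def v_def)
  have vW: "v \<in> W c" using J_W[OF u] by (simp add: v_def)
  have Fv: "F v = a *\<^sub>R v - b *\<^sub>R u"
    using F_J[OF c, of v] J_J[OF c u] by (simp add: a_def b_def v_def)
  have FTu: "FT u = a *\<^sub>R u - b *\<^sub>R v" using W_FT_eq[OF u] Fu
    by (simp add: a_def vec_eq_iff algebra_simps)
  have FTv: "FT v = a *\<^sub>R v + b *\<^sub>R u" using W_FT_eq[OF vW] Fv
    by (simp add: a_def vec_eq_iff algebra_simps)
  have i1: "F z \<bullet> u = a * (z \<bullet> u) - b * (z \<bullet> v)" by (simp add: F_adj FTu inner_diff_right)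
  have i2: "F z \<bullet> v = a * (z \<bullet> v) + b * (z \<bullet> u)" by (simp add: F_adj FTv inner_add_right)
  have "crf c u (F z) = F z - ((a * (z \<bullet> u) - b * (z \<bullet> v)) *\<^sub>R u + (a * (z \<bullet> v) + b * (z \<bullet> u)) *\<^sub>R v)"
    by (simp add: crf_def i1 i2 v_def[symmetric])
  also have "\<dots> = F (crf c u z)"
    by (simp add: crf_def v_def[symmetric] matrix_vector_mult_diff_distrib matrix_vector_right_distrib
        matrix_vector_mult_scaleR Fu Fv vec_eq_iff algebra_simps)
  finally show ?thesis .
qed

lemma rf_comm: assumes c: "c = 2 \<or> c = -2" and v: "v \<in> W c"
  shows "rf v (F z) = F (rf v z)"
  using c
proof
  assume "c = 2"
  then have Fv: "F v = v" using v by (simp add: W_2)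
  then have "FT v = v" by (metis FT_F)
  then show ?thesis using Fv by (simp add: rf_def F_adj matrix_vector_mult_diff_distrib matrix_vector_mult_scaleR)
next
  assume "c = -2"
  then have Fv: "F v = - v" using v by (simp add: W_m2)
  have "FT v = - v" using linear_neg[OF linFT, of v] Fv by (metis FT_F minus_minus)
  then show ?thesis using Fv by (simp add: rf_def F_adj matrix_vector_mult_diff_distrib matrix_vector_mult_scaleR)
qed

definition Rb :: "real \<Rightarrow> real^'n \<Rightarrow> real^'n" where
  "Rb c x = x - 2 *\<^sub>R oproj (W c) x"

lemma Rb_lin: "linear (Rb c)"
  using oproj_linear[OF W_sub, of c]
  by (intro linearI) (simp_all add: Rb_def linear_add linear_scale algebra_simps)

lemma Rb_orth: "orthogonal_transformation (Rb c)"
proof -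
  have "norm (Rb c z) = norm z" for z
  proof -
    have "oproj (W c) z \<bullet> oproj (W c) z = z \<bullet> oproj (W c) z"
      using oproj_orth[OF W_sub oproj(1)[OF W_sub]] by simp
    then have "Rb c z \<bullet> Rb c z = z \<bullet> z"
      by (simp add: Rb_def inner_diff_left inner_diff_right inner_commute algebra_simps)
    then show ?thesis by (simp add: norm_eq_sqrt_inner)
  qed
  then show ?thesis using Rb_lin by (simp add: orthogonal_transformation)
qed

lemma oproj_F: "oproj (W c) (F x) = F (oproj (W c) x)"
proof (rule oproj_unique[OF W_sub])
  show "F (oproj (W c) x) \<in> W c" using W_F oproj(1)[OF W_sub] by blast
  fix w assume w: "w \<in> W c"
  have "(F x - F (oproj (W c) x)) \<bullet> w = (x - oproj (W c) x) \<bullet> FT w"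
    by (simp add: F_adj[symmetric] matrix_vector_mult_diff_distrib)
  also have "\<dots> = 0" using oproj(2)[OF W_sub W_FT[OF w]] .
  finally show "(F x - F (oproj (W c) x)) \<bullet> w = 0" .
qed

lemma Rb_comm: "Rb c (F x) = F (Rb c x)"
  by (simp add: Rb_def oproj_F matrix_vector_mult_diff_distrib matrix_vector_mult_scaleR)

end

locale samecent = f: om f + g: om g for f g :: "real^'n^'n" +
  assumes same: "\<And>h. orthogonal_transformation h \<Longrightarrow>
     (\<forall>x. h (f *v x) = f *v (h x)) \<longleftrightarrow> (\<forall>x. h (g *v x) = g *v (h x))"
begin

lemma proj_pres: assumes x: "x \<in> f.W c" shows "oproj (g.W d) x \<in> f.W c"
proof -
  have "\<forall>x. g.Rb d (g *v x) = g *v (g.Rb d x)" using g.Rb_comm by blast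
  then have "\<forall>x. g.Rb d (f *v x) = f *v (g.Rb d x)" using same[OF g.Rb_orth] by blast
  then have "g.Rb d x \<in> f.W c" using f.comm_W[OF g.Rb_lin _ x] by blast
  then have "x - g.Rb d x \<in> f.W c" using x f.W_sub by (simp add: subspace_diff)
  moreover have "x - g.Rb d x = 2 *\<^sub>R oproj (g.W d) x" by (simp add: g.Rb_def)
  ultimately have "(1/2) *\<^sub>R (2 *\<^sub>R oproj (g.W d) x) \<in> f.W c" using f.W_sub by (metis subspace_scale)
  then show ?thesis by simp
qed

lemma F_pres: assumes y: "y \<in> g.W d" shows "f *v y \<in> g.W d"
proof -
  have "\<forall>x. f *v (f *v x) = f *v (f *v x)" by simp
  then have "\<forall>x. f *v (g *v x) = g *v (f *v x)" using same[OF f.F_orth] by blast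
  then show ?thesis using g.comm_W[OF f.linF _ y] by blast
qed

lemma J_pres: assumes y: "y \<in> g.W d" shows "f.J c y \<in> g.W d"
  unfolding f.J_def using F_pres[OF y] y g.W_sub by (metis subspace_diff subspace_scale)

lemma core_incl: assumes c: "c \<in> f.cs" shows "\<exists>d\<in>g.cs. f.W c \<subseteq> g.W d"
proof -
  let ?U = "f.W c"
  let ?P = "\<lambda>d. oproj (g.W d)"
  obtain u where u: "u \<in> ?U" "u \<noteq> 0" using c f.W_sub subspace_0 unfolding f.cs_def by blast
  have "\<exists>d0\<in>g.cs. ?P d0 u \<noteq> 0"
  proof (rule ccontr)
    assume "\<not> ?thesis"
    then have "(\<Sum>d\<in>g.cs. ?P d u) = 0" by simp
    then show False using g.decomp[of u] u(2) by simp
  qed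
  then obtain d0 where d0: "d0 \<in> g.cs" "?P d0 u \<noteq> 0" by blast
  have "x \<in> g.W d0" if x: "x \<in> ?U" for x
  proof (rule ccontr)
    assume nx: "x \<notin> g.W d0"
    have "\<exists>d1\<in>g.cs. d1 \<noteq> d0 \<and> ?P d1 x \<noteq> 0"
    proof (rule ccontr)
      assume "\<not> ?thesis"
      then have "(\<Sum>d\<in>g.cs. ?P d x) = (\<Sum>d\<in>g.cs. if d = d0 then ?P d0 x else 0)"
        by (intro sum.cong) auto
      also have "\<dots> = ?P d0 x" using d0(1) g.finite_cs by simp
      finally have "x = ?P d0 x" using g.decomp[of x] by simp
      then show False using nx oproj(1)[OF g.W_sub] by metis
    qed
    then obtain d1 where d1: "d1 \<in> g.cs" "d1 \<noteq> d0" "?P d1 x \<noteq> 0" by blast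
    define x0 where "x0 = (1 / norm (?P d0 u)) *\<^sub>R ?P d0 u"
    define y0 where "y0 = (1 / norm (?P d1 x)) *\<^sub>R ?P d1 x"
    have x0U: "x0 \<in> ?U" unfolding x0_def using proj_pres[OF u(1)] f.W_sub by (simp add: subspace_scale)
    have y0U: "y0 \<in> ?U" unfolding y0_def using proj_pres[OF x] f.W_sub by (simp add: subspace_scale)
    have x0W: "x0 \<in> g.W d0" unfolding x0_def using oproj(1)[OF g.W_sub] g.W_sub by (simp add: subspace_scale)
    have y0W: "y0 \<in> g.W d1" unfolding y0_def using oproj(1)[OF g.W_sub] g.W_sub by (simp add: subspace_scale)
    have nx0: "x0 \<bullet> x0 = 1" unfolding x0_def using d0(2)
      by (simp add: dot_square_norm power2_eq_square)
    have ny0: "y0 \<bullet> y0 = 1" unfolding y0_def using d1(3)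
      by (simp add: dot_square_norm power2_eq_square)
    have xy: "x0 \<bullet> y0 = 0" using g.W_orth[OF x0W y0W] d1(2) by auto
    have "\<exists>h. orthogonal_transformation h \<and> (\<forall>z. h (f *v z) = f *v (h z)) \<and> h x0 = y0"
    proof (cases "\<bar>c\<bar> < 2")
      case True
      define w where "w = x0 - y0"
      have wU: "w \<in> ?U" using x0U y0U f.W_sub by (simp add: w_def subspace_diff)
      have ww: "w \<bullet> w = 2" using nx0 ny0 xy by (simp add: w_def inner_diff_left inner_diff_right inner_commute)
      have a1: "x0 \<bullet> w = 1" using nx0 xy by (simp add: w_def inner_diff_right)
      have "f.J c w = f.J c x0 - f.J c y0" using linear_diff[OF f.J_lin] by (simp add: w_def)
      moreover have "x0 \<bullet> f.J c x0 = 0" using f.J_self[OF True x0U] by (simp add: inner_commute)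
      moreover have "x0 \<bullet> f.J c y0 = 0" using g.W_orth[OF x0W J_pres[OF y0W]] d1(2) by auto
      ultimately have a2: "x0 \<bullet> f.J c w = 0" by (simp add: inner_diff_right)
      have "f.crf c w x0 = y0" using a1 a2 by (simp add: f.crf_def w_def)
      then show ?thesis using f.crf_orth[OF True wU ww] f.crf_comm[OF True wU] by blast
    next
      case False
      then have c2: "c = 2 \<or> c = -2" using f.cs_bound[OF c] by auto
      define w where "w = x0 - y0"
      have wU: "w \<in> ?U" using x0U y0U f.W_sub by (simp add: w_def subspace_diff)
      have ww: "w \<bullet> w = 2" using nx0 ny0 xy by (simp add: w_def inner_diff_left inner_diff_right inner_commute)
      have a1: "x0 \<bullet> w = 1" using nx0 xy by (simp add: w_def inner_diff_right)
      have "rf w x0 = y0" using a1 by (simp add: rf_def w_def)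
      then show ?thesis using rf_orth[OF ww] f.rf_comm[OF c2 wU] by blast
    qed
    then obtain h where h: "orthogonal_transformation h" "\<forall>z. h (f *v z) = f *v (h z)" "h x0 = y0" by blast
    then have "\<forall>z. h (g *v z) = g *v (h z)" using same by blast
    then have "h x0 \<in> g.W d0" using g.comm_W[OF orthogonal_transformation_linear[OF h(1)] _ x0W] by blast
    then have "y0 \<bullet> y0 = 0" using g.W_orth[OF _ y0W] d1(2) h(3) by auto
    then show False using ny0 by simp
  qed
  then show ?thesis using d0(1) by blast
qed

lemma core_type: assumes c: "c \<in> f.cs" and d: "d \<in> g.cs" and eq: "f.W c = g.W d"
  and nc: "\<not> \<bar>c\<bar> < 2" shows "\<not> \<bar>d\<bar> < 2"
proof
  assume dl: "\<bar>d\<bar> < 2"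
  have c2: "c = 2 \<or> c = -2" using f.cs_bound[OF c] nc by auto
  obtain x where x: "x \<in> f.W c" "x \<noteq> 0" using c f.W_sub subspace_0 unfolding f.cs_def by blast
  define s where "s = sqrt 2 / norm x"
  define v where "v = s *\<^sub>R x"
  have vW: "v \<in> f.W c" using x f.W_sub by (simp add: v_def subspace_scale)
  have ss: "s * s * (x \<bullet> x) = 2" using x(2) by (simp add: s_def dot_square_norm power2_eq_square)
  have vv: "v \<bullet> v = 2" using ss by (simp add: v_def algebra_simps)
  have "\<forall>z. rf v (f *v z) = f *v (rf v z)" using f.rf_comm[OF c2 vW] by blast
  then have cm: "\<forall>z. rf v (g *v z) = g *v (rf v z)" using same[OF rf_orth[OF vv]] by blast
  have xv: "(x \<bullet> v) *\<^sub>R v = 2 *\<^sub>R x"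
  proof -
    have "(x \<bullet> v) *\<^sub>R v = ((s * (x \<bullet> x)) * s) *\<^sub>R x" by (simp add: v_def)
    also have "(s * (x \<bullet> x)) * s = 2" using ss by (simp add: mult.commute mult.left_commute)
    finally show ?thesis .
  qed
  have hx: "rf v x = - x" by (simp add: rf_def xv scaleR_2)
  define y where "y = g *v x"
  define k where "k = y \<bullet> v"
  have "rf v y = g *v (rf v x)" using cm by (simp add: y_def)
  also have "\<dots> = - y" using hx linear_neg[OF g.linF, of x] by (simp add: y_def)
  finally have "y - k *\<^sub>R v = - y" by (simp add: rf_def k_def)
  then have "y = (k * s / 2) *\<^sub>R x" by (simp add: v_def vec_eq_iff field_simps)
  then have "g *v x = (k * s / 2) *\<^sub>R x" by (simp add: y_def)
  then have "x = 0" using g.no_real_eig[OF dl] x(1) eq by blast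
  then show False using x(2) by simp
qed

end

definition cstruct :: "'a::euclidean_space set \<Rightarrow> ('a \<Rightarrow> 'a) \<Rightarrow> bool" where
  "cstruct U J \<longleftrightarrow> subspace U \<and> linear J \<and> (\<forall>x\<in>U. J x \<in> U \<and> J (J x) = - x)
     \<and> (\<forall>x\<in>U. \<forall>y\<in>U. J x \<bullet> J y = x \<bullet> y)"

lemma cs_skew: "cstruct U J \<Longrightarrow> x \<in> U \<Longrightarrow> y \<in> U \<Longrightarrow> J x \<bullet> y = - (x \<bullet> J y)"
proof -
  assume U: "cstruct U J" and x: "x \<in> U" and y: "y \<in> U"
  have Jx: "J x \<in> U" and inn: "\<forall>a\<in>U. \<forall>b\<in>U. J a \<bullet> J b = a \<bullet> b" using U x by (auto simp: cstruct_def)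
  have "J x \<bullet> y = J (J x) \<bullet> J y" using inn Jx y by simp
  also have "J (J x) = - x" using U x by (simp add: cstruct_def)
  finally show ?thesis by simp
qed

lemma cs_self: "cstruct U J \<Longrightarrow> x \<in> U \<Longrightarrow> J x \<bullet> x = 0"
  using cs_skew[of U J x x] by (simp add: inner_commute)

definition rest :: "('a::euclidean_space \<Rightarrow> 'a) \<Rightarrow> 'a \<Rightarrow> 'a \<Rightarrow> 'a" where
  "rest J e x = x - (x \<bullet> e) *\<^sub>R e - (x \<bullet> J e) *\<^sub>R J e"

definition sub' :: "'a::euclidean_space set \<Rightarrow> ('a \<Rightarrow> 'a) \<Rightarrow> 'a \<Rightarrow> 'a set" where
  "sub' U J e = {y\<in>U. y \<bullet> e = 0 \<and> y \<bullet> J e = 0}"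

lemma orth3: assumes "e \<bullet> e = 1" "d \<bullet> d = 1" "e \<bullet> d = 0" "w \<bullet> e = 0" "w \<bullet> d = 0"
  shows "(a *\<^sub>R e + b *\<^sub>R d + w) \<bullet> (a *\<^sub>R e + b *\<^sub>R d + w) = a*a + b*b + w \<bullet> w"
  using assms by (simp add: inner_add_left inner_add_right inner_commute algebra_simps)

locale cunit =
  fixes U :: "'a::euclidean_space set" and J e
  assumes cs: "cstruct U J" and eU: "e \<in> U" and ee: "e \<bullet> e = 1"
begin

lemma sU: "subspace U" using cs by (simp add: cstruct_def)
lemma lJ: "linear J" using cs by (simp add: cstruct_def)
lemma JU: "x \<in> U \<Longrightarrow> J x \<in> U" using cs by (simp add: cstruct_def)
lemma JJ: "x \<in> U \<Longrightarrow> J (J x) = - x" using cs by (simp add: cstruct_def)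
lemma Jin: "x \<in> U \<Longrightarrow> y \<in> U \<Longrightarrow> J x \<bullet> J y = x \<bullet> y" using cs by (simp add: cstruct_def)

lemma Je: "J e \<in> U" "J e \<bullet> J e = 1" "e \<bullet> J e = 0" "J e \<bullet> e = 0"
  using JU[OF eU] Jin[OF eU eU] ee cs_self[OF cs eU] by (auto simp: inner_commute)

lemma rest_sub: "x \<in> U \<Longrightarrow> rest J e x \<in> sub' U J e"
  unfolding sub'_def rest_def using eU Je sU ee
  by (auto simp: inner_diff_left subspace_diff subspace_scale)

lemma rest_id: "x \<in> sub' U J e \<Longrightarrow> rest J e x = x"
  by (simp add: sub'_def rest_def)

lemma decomp3: "x = (x \<bullet> e) *\<^sub>R e + (x \<bullet> J e) *\<^sub>R J e + rest J e x"
  by (simp add: rest_def)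

lemma sub_cs: "cstruct (sub' U J e) J"
proof -
  have "subspace (sub' U J e)" using sU unfolding sub'_def subspace_def
    by (auto simp: inner_add_left)
  moreover have "J y \<in> sub' U J e" if "y \<in> sub' U J e" for y
  proof -
    have y: "y \<in> U" "y \<bullet> e = 0" "y \<bullet> J e = 0" using that by (auto simp: sub'_def)
    have "J y \<bullet> e = - (y \<bullet> J e)" using cs_skew[OF cs y(1) eU] .
    moreover have "J y \<bullet> J e = y \<bullet> e" using Jin[OF y(1) eU] .
    ultimately show ?thesis using y JU by (simp add: sub'_def)
  qed
  ultimately show ?thesis using cs unfolding cstruct_def sub'_def by auto
qed

lemma sub_dim: "dim (sub' U J e) + 2 = dim U"
proof -
  let ?A = "span {e, J e}"
  have A: "subspace ?A" "?A \<subseteq> U" using sU eU Je(1) by (auto simp: span_minimal)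
  have eq: "{y \<in> U. \<forall>x\<in>?A. orthogonal x y} = sub' U J e"
  proof safe
    fix y assume "y \<in> U" "\<forall>x\<in>?A. orthogonal x y"
    then show "y \<in> sub' U J e" by (auto simp: sub'_def orthogonal_def span_base inner_commute)
  next
    fix y assume "y \<in> sub' U J e" then show "y \<in> U" by (simp add: sub'_def)
  next
    fix y x assume y: "y \<in> sub' U J e" and x: "x \<in> ?A"
    have "orthogonal y x" using x
      by (rule orthogonal_to_span) (use y in \<open>auto simp: sub'_def orthogonal_def inner_commute\<close>)
    then show "orthogonal x y" by (simp add: orthogonal_commute)
  qed
  have "e \<noteq> J e" using ee Je by auto
  moreover have "independent {e, J e}"
    using ee Je by (intro pairwise_orthogonal_independent) (auto simp: pairwise_def orthogonal_def inner_commute)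
  ultimately have "dim ?A = 2" by (simp add: dim_span dim_eq_card_independent)
  then show ?thesis using dim_subspace_orthogonal_to_vectors[OF A(1) sU A(2)] eq by simp
qed

lemma rest_J: "x \<in> U \<Longrightarrow> rest J e (J x) = J (rest J e x)"
proof -
  assume x: "x \<in> U"
  have a: "J x \<bullet> e = - (x \<bullet> J e)" using cs_skew[OF cs x eU] .
  have b: "J x \<bullet> J e = x \<bullet> e" using Jin[OF x eU] .
  show ?thesis
  proof -
    have "J (rest J e x) = J x - (x \<bullet> e) *\<^sub>R J e - (x \<bullet> J e) *\<^sub>R J (J e)"
      unfolding rest_def by (simp add: linear_diff[OF lJ] linear_scale[OF lJ])
    also have "\<dots> = J x - (x \<bullet> e) *\<^sub>R J e + (x \<bullet> J e) *\<^sub>R e" using JJ[OF eU] by simp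
    also have "\<dots> = rest J e (J x)" unfolding rest_def a b by simp
    finally show ?thesis by simp
  qed
qed

end

lemma cplx_iso_aux:
  fixes J1 J2 :: "'a::euclidean_space \<Rightarrow> 'a"
  shows "\<forall>U1 U2. cstruct U1 J1 \<longrightarrow> cstruct U2 J2 \<longrightarrow> dim U1 = n \<longrightarrow> dim U2 = n \<longrightarrow>
    (\<exists>K. linear K \<and> K ` U1 = U2 \<and> (\<forall>x\<in>U1. norm (K x) = norm x) \<and> (\<forall>x\<in>U1. K (J1 x) = J2 (K x)))"
proof (induction n rule: less_induct)
  case (less n)
  show ?case
  proof (intro allI impI)
    fix U1 U2 assume c1: "cstruct U1 J1" and c2: "cstruct U2 J2" and d1: "dim U1 = n" and d2: "dim U2 = n"
    have s1: "subspace U1" and s2: "subspace U2" using c1 c2 by (auto simp: cstruct_def)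
    show "\<exists>K. linear K \<and> K ` U1 = U2 \<and> (\<forall>x\<in>U1. norm (K x) = norm x) \<and> (\<forall>x\<in>U1. K (J1 x) = J2 (K x))"
    proof (cases "n = 0")
      case True
      then have "U1 \<subseteq> {0}" "U2 \<subseteq> {0}" using d1 d2 dim_eq_0 by auto
      then have "U1 = {0}" "U2 = {0}" using s1 s2 subspace_0 by auto
      then show ?thesis using c1 c2 by (intro exI[of _ "\<lambda>x. 0"]) (auto simp: cstruct_def linear_0 intro: linear_zero)
    next
      case False
      have "\<not> U1 \<subseteq> {0}" using False d1 dim_eq_0 by metis
      then have "\<exists>e\<in>U1. e \<noteq> 0" by auto
      then obtain e1' where e1': "e1' \<in> U1" "e1' \<noteq> 0" by blast
      have "\<not> U2 \<subseteq> {0}" using False d2 dim_eq_0 by metis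
      then have "\<exists>e\<in>U2. e \<noteq> 0" by auto
      then obtain e2' where e2': "e2' \<in> U2" "e2' \<noteq> 0" by blast
      define e1 where "e1 = (1 / norm e1') *\<^sub>R e1'"
      define e2 where "e2 = (1 / norm e2') *\<^sub>R e2'"
      interpret u1: cunit U1 J1 e1
        using c1 e1' s1 by unfold_locales (auto simp: e1_def subspace_scale dot_square_norm power2_eq_square)
      interpret u2: cunit U2 J2 e2
        using c2 e2' s2 by unfold_locales (auto simp: e2_def subspace_scale dot_square_norm power2_eq_square)
      let ?V1 = "sub' U1 J1 e1" and ?V2 = "sub' U2 J2 e2"
      have lt: "dim ?V1 < n" and eqd: "dim ?V1 = dim ?V2" using u1.sub_dim u2.sub_dim d1 d2 by auto
      from less.IH[OF lt, rule_format, OF u1.sub_cs u2.sub_cs refl eqd[symmetric]]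
      obtain K' where K': "linear K'" "K' ` ?V1 = ?V2" "\<forall>x\<in>?V1. norm (K' x) = norm x"
        "\<forall>x\<in>?V1. K' (J1 x) = J2 (K' x)" by blast
      define K where "K x = (x \<bullet> e1) *\<^sub>R e2 + (x \<bullet> J1 e1) *\<^sub>R J2 e2 + K' (rest J1 e1 x)" for x
      have linK: "linear K"
        by (rule linearI) (simp_all add: K_def rest_def linear_add[OF K'(1)] linear_scale[OF K'(1)]
            linear_diff[OF K'(1)] inner_add_left algebra_simps)
      have KV: "K' (rest J1 e1 x) \<in> ?V2" if "x \<in> U1" for x using K'(2) u1.rest_sub[OF that] by blast
      have "K ` U1 \<subseteq> U2"
      proof
        fix y assume "y \<in> K ` U1"
        then obtain x where x: "x \<in> U1" "y = K x" by blast
        have "K' (rest J1 e1 x) \<in> U2" using KV[OF x(1)] by (simp add: sub'_def)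
        then show "y \<in> U2" using x u2.eU u2.Je s2 by (simp add: K_def subspace_add subspace_scale)
      qed
      moreover have "U2 \<subseteq> K ` U1"
      proof
        fix y assume y: "y \<in> U2"
        obtain z where z: "z \<in> ?V1" "K' z = rest J2 e2 y" using K'(2) u2.rest_sub[OF y] by force
        have zz: "z \<in> U1" "z \<bullet> e1 = 0" "z \<bullet> J1 e1 = 0" using z(1) by (auto simp: sub'_def)
        define x where "x = (y \<bullet> e2) *\<^sub>R e1 + (y \<bullet> J2 e2) *\<^sub>R J1 e1 + z"
        have xU: "x \<in> U1" using zz u1.eU u1.Je s1 by (simp add: x_def subspace_add subspace_scale)
        have a: "x \<bullet> e1 = y \<bullet> e2" "x \<bullet> J1 e1 = y \<bullet> J2 e2"
          using zz u1.ee u1.Je by (auto simp: x_def inner_add_left)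
        have "rest J1 e1 x = z" using a by (simp add: rest_def x_def)
        then have "K x = y" using a z(2) u2.decomp3[of y] by (simp add: K_def)
        then show "y \<in> K ` U1" using xU by blast
      qed
      ultimately have img: "K ` U1 = U2" by blast
      have nrm: "norm (K x) = norm x" if x: "x \<in> U1" for x
      proof -
        have r2: "K' (rest J1 e1 x) \<bullet> e2 = 0" "K' (rest J1 e1 x) \<bullet> J2 e2 = 0" using KV[OF x] by (auto simp: sub'_def)
        have r1: "rest J1 e1 x \<bullet> e1 = 0" "rest J1 e1 x \<bullet> J1 e1 = 0" using u1.rest_sub[OF x] by (auto simp: sub'_def)
        have nK': "K' (rest J1 e1 x) \<bullet> K' (rest J1 e1 x) = rest J1 e1 x \<bullet> rest J1 e1 x"
          using K'(3) u1.rest_sub[OF x] by (simp add: dot_square_norm)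
        have "K x \<bullet> K x = (x \<bullet> e1) * (x \<bullet> e1) + (x \<bullet> J1 e1) * (x \<bullet> J1 e1) + rest J1 e1 x \<bullet> rest J1 e1 x"
          unfolding K_def using orth3[OF u2.ee u2.Je(2) u2.Je(3) r2] nK' by simp
        also have "\<dots> = x \<bullet> x"
          using orth3[OF u1.ee u1.Je(2) u1.Je(3) r1, of "x \<bullet> e1" "x \<bullet> J1 e1"] u1.decomp3[of x] by simp
        finally show ?thesis by (simp add: norm_eq_sqrt_inner)
      qed
      have intw: "K (J1 x) = J2 (K x)" if x: "x \<in> U1" for x
      proof -
        have a: "J1 x \<bullet> e1 = - (x \<bullet> J1 e1)" using cs_skew[OF c1 x u1.eU] .
        have b: "J1 x \<bullet> J1 e1 = x \<bullet> e1" using u1.Jin[OF x u1.eU] .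
        have "K (J1 x) = - (x \<bullet> J1 e1) *\<^sub>R e2 + (x \<bullet> e1) *\<^sub>R J2 e2 + J2 (K' (rest J1 e1 x))"
          using K'(4) u1.rest_sub[OF x] by (simp add: K_def a b u1.rest_J[OF x])
        also have "\<dots> = J2 (K x)"
          using u2.JJ[OF u2.eU] by (simp add: K_def linear_add[OF u2.lJ] linear_scale[OF u2.lJ] algebra_simps)
        finally show ?thesis .
      qed
      show ?thesis using linK img nrm intw by blast
    qed
  qed
qed

lemma cplx_iso:
  fixes J1 J2 :: "'a::euclidean_space \<Rightarrow> 'a"
  assumes "cstruct U1 J1" "cstruct U2 J2" "dim U1 = dim U2"
  obtains K where "linear K" "K ` U1 = U2" "\<And>x. x \<in> U1 \<Longrightarrow> norm (K x) = norm x"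
    "\<And>x. x \<in> U1 \<Longrightarrow> K (J1 x) = J2 (K x)"
proof -
  from cplx_iso_aux[of J1 J2 "dim U1", rule_format, OF assms(1,2) refl assms(3)[symmetric]] obtain K where
    "linear K \<and> K ` U1 = U2 \<and> (\<forall>x\<in>U1. norm (K x) = norm x) \<and> (\<forall>x\<in>U1. K (J1 x) = J2 (K x))"
    by blast
  then show thesis using that by blast
qed

lemma matrix_inv_orth: fixes k :: "real^'n^'n" assumes "orthogonal_matrix k"
  shows "matrix_inv k = transpose k"
proof -
  have k: "transpose k ** k = mat 1" "k ** transpose k = mat 1" using assms by (auto simp: orthogonal_matrix_def)
  have "A = transpose k" if "k ** A = mat 1 \<and> A ** k = mat 1" for A :: "real^'n^'n"
  proof -
    have "A = A ** (k ** transpose k)" using k by simp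
    also have "\<dots> = (A ** k) ** transpose k" by (simp add: matrix_mul_assoc)
    also have "\<dots> = transpose k" using that by simp
    finally show ?thesis .
  qed
  moreover have "k ** transpose k = mat 1 \<and> transpose k ** k = mat 1" using k by simp
  ultimately show ?thesis unfolding matrix_inv_def by (metis (mono_tags, lifting) someI_ex)
qed

lemma centO_iff: "h \<in> centralizer_O u \<longleftrightarrow> orthogonal_matrix h \<and> (\<forall>x. h *v (u *v x) = u *v (h *v x))"
  by (simp add: centralizer_O_def orth_group_def matrix_eq matrix_vector_mul_assoc)

context om begin

lemma cstruct_W: "\<bar>c\<bar> < 2 \<Longrightarrow> cstruct (W c) (J c)"
  unfolding cstruct_def using W_sub J_lin J_W J_J J_inner by blast

end

locale twoom = f: om f + g: om g for f g :: "real^'n^'n" +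
  fixes \<sigma> :: "real \<Rightarrow> real"
  assumes bij: "bij_betw \<sigma> f.cs g.cs"
    and dims: "\<And>c. c \<in> f.cs \<Longrightarrow> dim (f.W c) = dim (g.W (\<sigma> c))"
    and typp: "\<And>c. c \<in> f.cs \<Longrightarrow> \<bar>c\<bar> < 2 \<longleftrightarrow> \<bar>\<sigma> c\<bar> < 2"
begin

definition good :: "real \<Rightarrow> (real^'n \<Rightarrow> real^'n) \<Rightarrow> bool" where
  "good c K \<longleftrightarrow> linear K \<and> K ` f.W c = g.W (\<sigma> c) \<and> (\<forall>x\<in>f.W c. norm (K x) = norm x)
     \<and> (\<bar>c\<bar> < 2 \<longrightarrow> (\<forall>x\<in>f.W c. K (f.J c x) = g.J (\<sigma> c) (K x)))"

lemma good_ex: assumes c: "c \<in> f.cs" shows "\<exists>K. good c K"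
proof (cases "\<bar>c\<bar> < 2")
  case True
  then have d: "\<bar>\<sigma> c\<bar> < 2" using typp[OF c] by simp
  obtain K where "linear K" "K ` f.W c = g.W (\<sigma> c)" "\<And>x. x \<in> f.W c \<Longrightarrow> norm (K x) = norm x"
    "\<And>x. x \<in> f.W c \<Longrightarrow> K (f.J c x) = g.J (\<sigma> c) (K x)"
    using cplx_iso[OF f.cstruct_W[OF True] g.cstruct_W[OF d] dims[OF c]] by metis
  then show ?thesis unfolding good_def by blast
next
  case False
  obtain K G where "linear K" "K ` f.W c = g.W (\<sigma> c)" "\<And>x. x \<in> f.W c \<Longrightarrow> norm (K x) = norm x"
    using isometries_subspaces[OF f.W_sub g.W_sub dims[OF c]] by metis
  then show ?thesis using False unfolding good_def by blast
qed

definition Kc :: "real \<Rightarrow> real^'n \<Rightarrow> real^'n" where "Kc c = (SOME K. good c K)"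

lemma Kc_good: "c \<in> f.cs \<Longrightarrow> good c (Kc c)"
  unfolding Kc_def using good_ex someI_ex by metis

definition KK :: "real^'n \<Rightarrow> real^'n" where
  "KK x = (\<Sum>c\<in>f.cs. Kc c (oproj (f.W c) x))"

lemma KK_lin: "linear KK"
proof -
  have "linear (\<lambda>x. Kc c (oproj (f.W c) x))" if "c \<in> f.cs" for c
    using Kc_good[OF that] oproj_linear[OF f.W_sub] unfolding good_def
    by (simp add: linear_compose[unfolded o_def])
  then show ?thesis unfolding KK_def by (intro linear_compose_sum) auto
qed

lemma KK_block: assumes c: "c \<in> f.cs" and x: "x \<in> f.W c" shows "KK x = Kc c x"
proof -
  have "KK x = (\<Sum>c'\<in>f.cs. if c' = c then Kc c x else 0)"
    unfolding KK_def
  proof (rule sum.cong[OF refl])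
    fix c' assume c': "c' \<in> f.cs"
    show "Kc c' (oproj (f.W c') x) = (if c' = c then Kc c x else 0)"
    proof (cases "c' = c")
      case True then show ?thesis using x by (simp add: oproj_id f.W_sub)
    next
      case False
      then have "oproj (f.W c') x = 0" using f.W_orth[OF x] by (intro oproj_zero[OF f.W_sub]) auto
      then show ?thesis using False Kc_good[OF c'] by (simp add: good_def linear_0)
    qed
  qed
  also have "\<dots> = Kc c x" using c f.finite_cs by simp
  finally show ?thesis .
qed

lemma KK_norm: "norm (KK x) = norm x"
proof -
  let ?p = "\<lambda>c. oproj (f.W c) x"
  have inW: "Kc c (?p c) \<in> g.W (\<sigma> c)" if "c \<in> f.cs" for c
    using Kc_good[OF that] oproj(1)[OF f.W_sub] unfolding good_def by blast
  have "(norm (KK x))^2 = (\<Sum>c\<in>f.cs. (norm (Kc c (?p c)))^2)"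
    unfolding KK_def
  proof (rule norm_sum_Pythagorean[OF f.finite_cs])
    show "pairwise (\<lambda>i j. orthogonal (Kc i (?p i)) (Kc j (?p j))) f.cs"
      unfolding pairwise_def orthogonal_def
    proof (intro ballI impI)
      fix i j assume ij: "i \<in> f.cs" "j \<in> f.cs" "i \<noteq> j"
      then have "\<sigma> i \<noteq> \<sigma> j" using bij by (auto simp: bij_betw_def inj_on_def)
      then show "Kc i (?p i) \<bullet> Kc j (?p j) = 0" using g.W_orth[OF inW[OF ij(1)] inW[OF ij(2)]] by blast
    qed
  qed
  also have "\<dots> = (\<Sum>c\<in>f.cs. (norm (?p c))^2)"
    using Kc_good oproj(1)[OF f.W_sub] unfolding good_def by (intro sum.cong) auto
  also have "\<dots> = (norm (\<Sum>c\<in>f.cs. ?p c))^2"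
  proof (rule norm_sum_Pythagorean[OF f.finite_cs, symmetric])
    show "pairwise (\<lambda>i j. orthogonal (?p i) (?p j)) f.cs"
      unfolding pairwise_def orthogonal_def using f.W_orth oproj(1)[OF f.W_sub] by blast
  qed
  also have "(\<Sum>c\<in>f.cs. ?p c) = x" using f.decomp[of x] by simp
  finally show ?thesis by (simp add: power2_eq_iff_nonneg)
qed

lemma KK_orth: "orthogonal_transformation KK"
  using KK_lin KK_norm by (simp add: orthogonal_transformation)

definition k :: "real^'n^'n" where "k = matrix KK"

lemma k_orth: "orthogonal_matrix k"
  using KK_orth KK_lin by (simp add: k_def orthogonal_transformation_matrix)

lemma k_apply: "k *v x = KK x"
  using KK_lin by (simp add: k_def)

lemma kT_k: "transpose k *v (k *v x) = x"
  using k_orth unfolding orthogonal_matrix_def by (metis matrix_vector_mul_assoc matrix_vector_mul_lid)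

lemma k_kT: "k *v (transpose k *v x) = x"
  using k_orth unfolding orthogonal_matrix_def by (metis matrix_vector_mul_assoc matrix_vector_mul_lid)

lemma KK_img: "c \<in> f.cs \<Longrightarrow> KK ` f.W c = g.W (\<sigma> c)"
  using Kc_good KK_block unfolding good_def by (metis (no_types, lifting) image_cong)

lemma KK_J: "c \<in> f.cs \<Longrightarrow> \<bar>c\<bar> < 2 \<Longrightarrow> x \<in> f.W c \<Longrightarrow> KK (f.J c x) = g.J (\<sigma> c) (KK x)"
  using Kc_good KK_block f.J_W unfolding good_def by metis

lemma blk_equiv_ok:
  fixes h :: "real^'n^'n"
  assumes c: "c \<in> f.cs"
  defines "H \<equiv> (\<lambda>x. h *v x)" and "H' \<equiv> (\<lambda>y. k *v (h *v (transpose k *v y)))"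
  shows "f.blk_ok H c \<longleftrightarrow> g.blk_ok H' (\<sigma> c)"
proof
  have H'K: "H' (KK x) = KK (H x)" for x by (simp add: H'_def H_def k_apply[symmetric] kT_k)
  assume ok: "f.blk_ok H c"
  show "g.blk_ok H' (\<sigma> c)" unfolding g.blk_ok_def
  proof (intro ballI conjI impI)
    fix y assume y: "y \<in> g.W (\<sigma> c)"
    then obtain x where x: "x \<in> f.W c" "y = KK x" using KK_img[OF c] by blast
    have Hx: "H x \<in> f.W c" using ok x(1) by (simp add: f.blk_ok_def)
    show "H' y \<in> g.W (\<sigma> c)" using H'K x Hx KK_img[OF c] by blast
    assume d: "\<bar>\<sigma> c\<bar> < 2"
    then have cc: "\<bar>c\<bar> < 2" using typp[OF c] by simp
    have "H' (g.J (\<sigma> c) y) = H' (KK (f.J c x))" using KK_J[OF c cc x(1)] x(2) by simp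
    also have "\<dots> = KK (H (f.J c x))" by (rule H'K)
    also have "\<dots> = KK (f.J c (H x))" using ok x(1) cc by (simp add: f.blk_ok_def)
    also have "\<dots> = g.J (\<sigma> c) (KK (H x))" using KK_J[OF c cc Hx] .
    also have "\<dots> = g.J (\<sigma> c) (H' y)" using H'K x(2) by simp
    finally show "H' (g.J (\<sigma> c) y) = g.J (\<sigma> c) (H' y)" .
  qed
next
  have H'K: "H' (KK x) = KK (H x)" for x by (simp add: H'_def H_def k_apply[symmetric] kT_k)
  have injK: "KK a = KK b \<Longrightarrow> a = b" for a b using kT_k by (metis k_apply)
  assume ok: "g.blk_ok H' (\<sigma> c)"
  show "f.blk_ok H c" unfolding f.blk_ok_def
  proof (intro ballI conjI impI)
    fix x assume x: "x \<in> f.W c"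
    have Kx: "KK x \<in> g.W (\<sigma> c)" using KK_img[OF c] x by blast
    then have "H' (KK x) \<in> g.W (\<sigma> c)" using ok by (simp add: g.blk_ok_def)
    then obtain z where z: "z \<in> f.W c" "H' (KK x) = KK z" using KK_img[OF c] by (metis imageE)
    have Hx: "H x = z" using z(2) H'K injK by metis
    then show "H x \<in> f.W c" using z(1) by simp
    assume cc: "\<bar>c\<bar> < 2"
    then have d: "\<bar>\<sigma> c\<bar> < 2" using typp[OF c] by simp
    have "KK (H (f.J c x)) = H' (KK (f.J c x))" by (simp add: H'K)
    also have "\<dots> = H' (g.J (\<sigma> c) (KK x))" using KK_J[OF c cc x] by simp
    also have "\<dots> = g.J (\<sigma> c) (H' (KK x))" using ok Kx d by (simp add: g.blk_ok_def)
    also have "\<dots> = g.J (\<sigma> c) (KK (H x))" by (simp add: H'K)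
    also have "\<dots> = KK (f.J c (H x))" using KK_J[OF c cc] Hx z(1) by simp
    finally show "H (f.J c x) = f.J c (H x)" using injK by blast
  qed
qed

lemma conj_comm:
  fixes h :: "real^'n^'n"
  shows "(\<forall>x. h *v (f *v x) = f *v (h *v x)) \<longleftrightarrow>
         (\<forall>y. (k ** h ** transpose k) *v (g *v y) = g *v ((k ** h ** transpose k) *v y))"
proof -
  let ?H = "\<lambda>x. h *v x" and ?H' = "\<lambda>y. k *v (h *v (transpose k *v y))"
  have e: "(k ** h ** transpose k) *v y = ?H' y" for y by (simp add: matrix_vector_mul_assoc[symmetric])
  have eqf: "(\<lambda>y. (k ** h ** transpose k) *v y) = ?H'" by (rule ext) (rule e)
  have "(\<forall>x. h *v (f *v x) = f *v (h *v x)) \<longleftrightarrow> (\<forall>c\<in>f.cs. f.blk_ok ?H c)"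
    using f.comm_iff[of ?H] by simp
  also have "\<dots> \<longleftrightarrow> (\<forall>c\<in>f.cs. g.blk_ok ?H' (\<sigma> c))" using blk_equiv_ok by blast
  also have "\<dots> \<longleftrightarrow> (\<forall>d\<in>\<sigma> ` f.cs. g.blk_ok ?H' d)" by auto
  also have "\<sigma> ` f.cs = g.cs" using bij by (simp add: bij_betw_def)
  also have "(\<forall>d\<in>g.cs. g.blk_ok ?H' d) \<longleftrightarrow> (\<forall>y. (k ** h ** transpose k) *v (g *v y) = g *v ((k ** h ** transpose k) *v y))"
  proof -
    have lin: "linear ?H'" using eqf matrix_vector_mul_linear by metis
    show ?thesis using g.comm_iff[OF lin] e by simp
  qed
  finally show ?thesis .
qed

lemma conj_cent: "(\<lambda>h. k ** h ** matrix_inv k) ` centralizer_O f = centralizer_O g"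
proof -
  have mi: "matrix_inv k = transpose k" by (rule matrix_inv_orth[OF k_orth])
  have kk: "k ** transpose k = mat 1" "transpose k ** k = mat 1" using k_orth by (auto simp: orthogonal_matrix_def)
  show ?thesis unfolding mi
  proof safe
    fix h assume "h \<in> centralizer_O f"
    then show "k ** h ** transpose k \<in> centralizer_O g"
      using conj_comm[of h] k_orth by (simp add: centO_iff orthogonal_matrix_mul)
  next
    fix h' assume h': "h' \<in> centralizer_O g"
    define h where "h = transpose k ** h' ** k"
    have hback: "k ** h ** transpose k = h'" unfolding h_def
      by (simp add: matrix_mul_assoc kk) (simp add: matrix_mul_assoc[symmetric] kk)
    have oh: "orthogonal_matrix h" using h' k_orth unfolding h_def by (simp add: centO_iff orthogonal_matrix_mul)
    have "\<forall>x. h *v (f *v x) = f *v (h *v x)" using conj_comm[of h] h' unfolding hback by (simp add: centO_iff)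
    then have "h \<in> centralizer_O f" using oh by (simp add: centO_iff)
    then show "h' \<in> (\<lambda>h. k ** h ** transpose k) ` centralizer_O f" using hback by force
  qed
qed

end

definition blk_equiv :: "real^'n^'n \<Rightarrow> real^'n^'n \<Rightarrow> bool" where
  "blk_equiv f g \<longleftrightarrow> (\<exists>\<sigma>. bij_betw \<sigma> (om.cs f) (om.cs g) \<and>
     (\<forall>c\<in>om.cs f. dim (om.W f c) = dim (om.W g (\<sigma> c)) \<and> (\<bar>c\<bar> < 2 \<longleftrightarrow> \<bar>\<sigma> c\<bar> < 2)))"

lemma blk_equiv_trans: "blk_equiv f g \<Longrightarrow> blk_equiv g h \<Longrightarrow> blk_equiv f h"
  unfolding blk_equiv_def
proof (elim exE conjE)
  fix \<sigma> \<tau> assume s: "bij_betw \<sigma> (om.cs f) (om.cs g)" "\<forall>c\<in>om.cs f. dim (om.W f c) = dim (om.W g (\<sigma> c)) \<and> (\<bar>c\<bar> < 2 \<longleftrightarrow> \<bar>\<sigma> c\<bar> < 2)"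
    and t: "bij_betw \<tau> (om.cs g) (om.cs h)" "\<forall>c\<in>om.cs g. dim (om.W g c) = dim (om.W h (\<tau> c)) \<and> (\<bar>c\<bar> < 2 \<longleftrightarrow> \<bar>\<tau> c\<bar> < 2)"
  have "bij_betw (\<tau> \<circ> \<sigma>) (om.cs f) (om.cs h)" using s(1) t(1) by (rule bij_betw_trans)
  moreover have "\<forall>c\<in>om.cs f. dim (om.W f c) = dim (om.W h ((\<tau> \<circ> \<sigma>) c)) \<and> (\<bar>c\<bar> < 2 \<longleftrightarrow> \<bar>(\<tau> \<circ> \<sigma>) c\<bar> < 2)"
    using s t bij_betwE[OF s(1)] by auto
  ultimately show "\<exists>\<sigma>. bij_betw \<sigma> (om.cs f) (om.cs h) \<and> (\<forall>c\<in>om.cs f. dim (om.W f c) = dim (om.W h (\<sigma> c)) \<and> (\<bar>c\<bar> < 2 \<longleftrightarrow> \<bar>\<sigma> c\<bar> < 2))"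
    by blast
qed

context om begin

lemma W_incl_eq: assumes c: "c \<in> cs" and "W c \<subseteq> W c'" shows "c = c'"
proof (rule ccontr)
  assume "c \<noteq> c'"
  obtain u where u: "u \<in> W c" "u \<noteq> 0" using c W_sub subspace_0 unfolding cs_def by blast
  then have "u \<bullet> u = 0" using W_orth[OF u(1), of u c'] assms(2) \<open>c \<noteq> c'\<close> by auto
  then show False using u(2) by simp
qed

end

lemma same_blocks_equiv:
  assumes fg: "samecent f g" and gf: "samecent g f"
  shows "blk_equiv f g"
proof -
  interpret fg: samecent f g by (rule fg)
  interpret gf: samecent g f by (rule gf)
  have ex: "\<exists>d\<in>fg.g.cs. om.W g d = om.W f c" if c: "c \<in> fg.f.cs" for c
  proof -
    obtain d where d: "d \<in> fg.g.cs" "om.W f c \<subseteq> om.W g d" using fg.core_incl[OF c] by blast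
    obtain c' where c': "c' \<in> fg.f.cs" "om.W g d \<subseteq> om.W f c'" using gf.core_incl[OF d(1)] by blast
    have "c = c'" using fg.f.W_incl_eq[OF c] d(2) c'(2) by blast
    then show ?thesis using d c' by blast
  qed
  have ex2: "\<exists>c\<in>fg.f.cs. om.W f c = om.W g d" if d: "d \<in> fg.g.cs" for d
  proof -
    obtain c where c: "c \<in> fg.f.cs" "om.W g d \<subseteq> om.W f c" using gf.core_incl[OF d] by blast
    obtain d' where d': "d' \<in> fg.g.cs" "om.W f c \<subseteq> om.W g d'" using fg.core_incl[OF c(1)] by blast
    have "d = d'" using fg.g.W_incl_eq[OF d] c(2) d'(2) by blast
    then show ?thesis using d' c by blast
  qed
  define \<sigma> where "\<sigma> c = (SOME d. d \<in> fg.g.cs \<and> om.W g d = om.W f c)" for c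
  have s: "\<sigma> c \<in> fg.g.cs" "om.W g (\<sigma> c) = om.W f c" if "c \<in> fg.f.cs" for c
    using someI_ex[OF ex[OF that, unfolded Bex_def]] by (auto simp: \<sigma>_def)
  have inj: "inj_on \<sigma> fg.f.cs"
  proof (rule inj_onI)
    fix c c' assume cc: "c \<in> fg.f.cs" "c' \<in> fg.f.cs" "\<sigma> c = \<sigma> c'"
    then have "om.W f c = om.W f c'" using s by metis
    then show "c = c'" using fg.f.W_incl_eq[OF cc(1)] by blast
  qed
  have surj: "\<sigma> ` fg.f.cs = fg.g.cs"
  proof safe
    fix c assume "c \<in> fg.f.cs" then show "\<sigma> c \<in> fg.g.cs" using s by blast
  next
    fix d assume d: "d \<in> fg.g.cs"
    obtain c where c: "c \<in> fg.f.cs" "om.W f c = om.W g d" using ex2[OF d] by blast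
    have "om.W g (\<sigma> c) = om.W g d" using s[OF c(1)] c(2) by simp
    then have "\<sigma> c = d" using fg.g.W_incl_eq[OF s(1)[OF c(1)]] by blast
    then show "d \<in> \<sigma> ` fg.f.cs" using c(1) by blast
  qed
  have ty: "\<bar>c\<bar> < 2 \<longleftrightarrow> \<bar>\<sigma> c\<bar> < 2" if c: "c \<in> fg.f.cs" for c
    using fg.core_type[OF c s(1)[OF c] s(2)[OF c, symmetric]]
      gf.core_type[OF s(1)[OF c] c s(2)[OF c]] by blast
  show ?thesis unfolding blk_equiv_def
    using inj surj s ty by (intro exI[of _ \<sigma>]) (auto simp: bij_betw_def)
qed

lemma samecent_of_cent:
  fixes f g :: "real^'n^'n"
  assumes f: "orthogonal_matrix f" and g: "orthogonal_matrix g"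
    and eq: "centralizer_O f = centralizer_O g"
  shows "samecent f g"
proof -
  interpret f: om f by (unfold_locales) (rule f)
  interpret g: om g by (unfold_locales) (rule g)
  show ?thesis
  proof unfold_locales
    fix h :: "real^'n \<Rightarrow> real^'n" assume h: "orthogonal_transformation h"
    have l: "linear h" using h by (rule orthogonal_transformation_linear)
    show "(\<forall>x. h (f *v x) = f *v h x) \<longleftrightarrow> (\<forall>x. h (g *v x) = g *v h x)"
      using f.cent_iff[OF l] g.cent_iff[OF l] eq h by simp
  qed
qed

lemma cent_eq_blk:
  fixes f g :: "real^'n^'n"
  assumes f: "orthogonal_matrix f" and g: "orthogonal_matrix g"
    and eq: "centralizer_O f = centralizer_O g"
  shows "blk_equiv f g"
  using same_blocks_equiv samecent_of_cent[OF f g eq] samecent_of_cent[OF g f eq[symmetric]] by blast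

section \<open>Conjugation\<close>

lemma conj_orth: fixes k f :: "real^'n^'n"
  assumes k: "orthogonal_matrix k" and f: "orthogonal_matrix f"
  shows "orthogonal_matrix (k ** f ** transpose k)"
  using k f by (simp add: orthogonal_matrix_mul)

lemma conj_W:
  fixes k f :: "real^'n^'n"
  assumes k: "orthogonal_matrix k" and f: "orthogonal_matrix f"
  shows "om.W (k ** f ** transpose k) c = (\<lambda>x. k *v x) ` om.W f c"
proof -
  have kk: "\<And>x. transpose k *v (k *v x) = x" "\<And>x. k *v (transpose k *v x) = x"
    using k unfolding orthogonal_matrix_def by (metis matrix_vector_mul_assoc matrix_vector_mul_lid)+
  have kinj: "k *v a = k *v b \<longleftrightarrow> a = b" for a b using kk(1) by metis
  have of: "om f" using f by unfold_locales
  have of': "om (k ** f ** transpose k)" using conj_orth[OF k f] by unfold_locales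
  let ?f' = "k ** f ** transpose k"
  have e1: "?f' *v x = k *v (f *v (transpose k *v x))" for x by (simp add: matrix_vector_mul_assoc[symmetric])
  have e2: "transpose ?f' *v x = k *v (transpose f *v (transpose k *v x))" for x
    by (simp add: matrix_transpose_mul matrix_mul_assoc matrix_vector_mul_assoc[symmetric])
  have "x \<in> om.W ?f' c \<longleftrightarrow> transpose k *v x \<in> om.W f c" for x
  proof -
    have "x \<in> om.W ?f' c \<longleftrightarrow> k *v (f *v (transpose k *v x) + transpose f *v (transpose k *v x)) = k *v (c *\<^sub>R (transpose k *v x))"
      by (simp add: om.W_def[OF of'] e1 e2 matrix_vector_right_distrib matrix_vector_mult_scaleR kk)
    also have "\<dots> \<longleftrightarrow> f *v (transpose k *v x) + transpose f *v (transpose k *v x) = c *\<^sub>R (transpose k *v x)"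
      using kinj by blast
    finally show ?thesis by (simp add: om.W_def[OF of])
  qed
  note iff = this
  show ?thesis
  proof (rule set_eqI)
    fix x
    show "x \<in> om.W ?f' c \<longleftrightarrow> x \<in> (\<lambda>x. k *v x) ` om.W f c"
    proof
      assume "x \<in> om.W ?f' c"
      then have "transpose k *v x \<in> om.W f c" using iff by blast
      moreover have "x = k *v (transpose k *v x)" using kk(2) by simp
      ultimately show "x \<in> (\<lambda>x. k *v x) ` om.W f c" by blast
    next
      assume "x \<in> (\<lambda>x. k *v x) ` om.W f c"
      then obtain y where y: "y \<in> om.W f c" "x = k *v y" by blast
      then have "transpose k *v x \<in> om.W f c" using kk(1) by simp
      then show "x \<in> om.W ?f' c" using iff by blast
    qed
  qed
qed

lemma conj_blk_equiv:
  fixes k f :: "real^'n^'n"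
  assumes k: "orthogonal_matrix k" and f: "orthogonal_matrix f"
  shows "blk_equiv f (k ** f ** transpose k)"
proof -
  have of: "om f" using f by unfold_locales
  have of': "om (k ** f ** transpose k)" using conj_orth[OF k f] by unfold_locales
  have inj: "inj ((*v) k)"
    using k unfolding orthogonal_matrix_def by (metis inj_on_inverseI matrix_vector_mul_assoc matrix_vector_mul_lid)
  have dimeq: "dim ((\<lambda>x. k *v x) ` S) = dim S" for S
    using dim_image_eq[OF matrix_vector_mul_linear, of k S] inj by (simp add: inj_on_def inj_def)
  have cs: "om.cs (k ** f ** transpose k) = om.cs f"
  proof -
    have "(\<lambda>x. k *v x) ` om.W f c = {0} \<longleftrightarrow> om.W f c = {0}" for c
    proof
      assume a: "(\<lambda>x. k *v x) ` om.W f c = {0}"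
      have "y = 0" if "y \<in> om.W f c" for y
      proof -
        have "k *v y = k *v 0" using a that by auto
        then show ?thesis using inj by (simp add: inj_def)
      qed
      moreover have "0 \<in> om.W f c" by (simp add: om.W_def[OF of])
      ultimately show "om.W f c = {0}" by blast
    qed simp
    then show ?thesis by (simp add: om.cs_def[OF of] om.cs_def[OF of'] conj_W[OF k f])
  qed
  show ?thesis unfolding blk_equiv_def cs
    by (intro exI[of _ id]) (simp add: conj_W[OF k f] dimeq)
qed

lemma conj_cent_f:
  fixes k f :: "real^'n^'n"
  assumes k: "orthogonal_matrix k"
  shows "centralizer_O (k ** f ** transpose k) = (\<lambda>h. k ** h ** transpose k) ` centralizer_O f"
proof -
  have kk: "transpose k ** k = mat 1" "k ** transpose k = mat 1" using k by (auto simp: orthogonal_matrix_def)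
  have c1: "X ** transpose k ** k = X" "X ** k ** transpose k = X" for X :: "real^'n^'n"
    by (simp_all add: matrix_mul_assoc[symmetric] kk)
  have c2: "transpose k ** k ** X = X" "k ** transpose k ** X = X" for X :: "real^'n^'n"
    by (simp_all add: kk)
  have canc: "k ** A ** transpose k = k ** B ** transpose k \<longleftrightarrow> A = B" for A B :: "real^'n^'n"
  proof
    assume "k ** A ** transpose k = k ** B ** transpose k"
    then have "transpose k ** (k ** A ** transpose k) ** k = transpose k ** (k ** B ** transpose k) ** k" by simp
    then show "A = B" by (simp add: matrix_mul_assoc c1 c2)
  qed simp
  have key: "(k ** h ** transpose k) ** (k ** f ** transpose k) = (k ** f ** transpose k) ** (k ** h ** transpose k)
     \<longleftrightarrow> h ** f = f ** h" for h
  proof -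
    have "(k ** h ** transpose k) ** (k ** f ** transpose k) = k ** (h ** f) ** transpose k"
      by (simp add: matrix_mul_assoc c1)
    moreover have "(k ** f ** transpose k) ** (k ** h ** transpose k) = k ** (f ** h) ** transpose k"
      by (simp add: matrix_mul_assoc c1)
    ultimately show ?thesis using canc by simp
  qed
  show ?thesis
  proof safe
    fix h' assume h': "h' \<in> centralizer_O (k ** f ** transpose k)"
    define h where "h = transpose k ** h' ** k"
    have hb: "k ** h ** transpose k = h'" unfolding h_def
      by (simp add: matrix_mul_assoc c1 c2)
    have "orthogonal_matrix h" using h' k by (simp add: h_def centralizer_O_def orth_group_def orthogonal_matrix_mul)
    moreover have "h ** f = f ** h" using key[of h] h' hb by (simp add: centralizer_O_def)
    ultimately have "h \<in> centralizer_O f" by (simp add: centralizer_O_def orth_group_def)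
    then show "h' \<in> (\<lambda>h. k ** h ** transpose k) ` centralizer_O f" using hb by force
  next
    fix h assume "h \<in> centralizer_O f"
    then show "k ** h ** transpose k \<in> centralizer_O (k ** f ** transpose k)"
      using key[of h] k by (simp add: centralizer_O_def orth_group_def orthogonal_matrix_mul)
  qed
qed

lemma cent_conj_imp_blk:
  fixes k f g :: "real^'n^'n"
  assumes f: "orthogonal_matrix f" and g: "orthogonal_matrix g" and k: "orthogonal_matrix k"
    and eq: "(\<lambda>h. k ** h ** matrix_inv k) ` centralizer_O f = centralizer_O g"
  shows "blk_equiv f g"
proof -
  have "centralizer_O (k ** f ** transpose k) = centralizer_O g"
    using conj_cent_f[OF k, of f] eq matrix_inv_orth[OF k] by simp
  then have "blk_equiv (k ** f ** transpose k) g" using cent_eq_blk conj_orth[OF k f] g by blast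
  then show ?thesis using blk_equiv_trans conj_blk_equiv[OF k f] by blast
qed

lemma blk_imp_cent_conj:
  fixes f g :: "real^'n^'n"
  assumes f: "orthogonal_matrix f" and g: "orthogonal_matrix g" and b: "blk_equiv f g"
  shows "\<exists>k. orthogonal_matrix k \<and> (\<lambda>h. k ** h ** matrix_inv k) ` centralizer_O f = centralizer_O g"
proof -
  obtain \<sigma> where s: "bij_betw \<sigma> (om.cs f) (om.cs g)"
    "\<forall>c\<in>om.cs f. dim (om.W f c) = dim (om.W g (\<sigma> c)) \<and> (\<bar>c\<bar> < 2 \<longleftrightarrow> \<bar>\<sigma> c\<bar> < 2)"
    using b unfolding blk_equiv_def by blast
  interpret t: twoom f g \<sigma>
    by unfold_locales (use f g s in auto)
  show ?thesis using t.k_orth t.conj_cent by blast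
qed

lemma scaleR_cvec: "r *\<^sub>R (v :: complex^'n) = complex_of_real r *s v"
  by (simp add: vec_eq_iff complex_eq_iff)

lemma csplit: "z *s (v :: complex^'n) = Re z *\<^sub>R v + Im z *\<^sub>R (\<i> *s v)"
  by (simp add: vec_eq_iff complex_eq_iff)

lemma cdim:
  fixes E :: "(complex^'n) set"
  assumes E: "vec.subspace E"
  shows "dim E = 2 * vec.dim E"
proof -
  obtain B where B: "B \<subseteq> E" "vec.independent B" "E \<subseteq> vec.span B" "card B = vec.dim E"
    using vec.basis_exists by blast
  have fB: "finite B" using B(2) vec.independent_bound_general by blast
  have B0: "0 \<notin> B" using B(2) vec.dependent_zero by blast
  define i where "i = (\<lambda>v::complex^'n. \<i> *s v)"
  have inji: "inj i" unfolding i_def inj_def by (simp add: vec_eq_iff)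
  have disj: "B \<inter> i ` B = {}"
  proof (rule ccontr)
    assume "B \<inter> i ` B \<noteq> {}"
    then obtain b b' where bb: "b \<in> B" "b' \<in> B" "b = \<i> *s b'" by (auto simp: i_def)
    show False
    proof (cases "b = b'")
      case True
      then have "(1 - \<i>) *s b = 0" using bb(3) by (simp add: vec_eq_iff algebra_simps)
      then have "b = 0" by (simp add: vec_eq_iff)
      then show False using B0 bb(1) by simp
    next
      case False
      have "b \<in> vec.span (B - {b})" using bb False
        by (simp add: vec.span_base vec.span_scale)
      then show False using B(2) bb(1) vec.dependent_def by blast
    qed
  qed
  define R where "R = B \<union> i ` B"
  have fR: "finite R" using fB by (simp add: R_def)
  have cR: "card R = 2 * card B"
    using fB disj inji by (simp add: R_def card_Un_disjoint card_image inj_on_subset)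
  have sum_R: "(\<Sum>v\<in>R. u v *\<^sub>R v) = (\<Sum>b\<in>B. Complex (u b) (u (i b)) *s b)" for u
  proof -
    have "(\<Sum>v\<in>R. u v *\<^sub>R v) = (\<Sum>v\<in>B. u v *\<^sub>R v) + (\<Sum>v\<in>i ` B. u v *\<^sub>R v)"
      using fB disj by (simp add: R_def sum.union_disjoint)
    also have "(\<Sum>v\<in>i ` B. u v *\<^sub>R v) = (\<Sum>b\<in>B. u (i b) *\<^sub>R i b)"
      using inji by (simp add: sum.reindex inj_on_subset)
    finally show ?thesis
      by (simp add: sum.distrib[symmetric] csplit[of "Complex _ _"] i_def)
  qed
  have indR: "independent R"
    unfolding independent_explicit
  proof (intro conjI allI impI ballI)
    show "finite R" by (rule fR)
    fix u v assume z: "(\<Sum>v\<in>R. u v *\<^sub>R v) = 0" and v: "v \<in> R"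
    have ind: "\<forall>c. (\<Sum>v\<in>B. c v *s v) = 0 \<longrightarrow> (\<forall>v\<in>B. c v = 0)"
      using B(2) unfolding vec.independent_explicit by blast
    have "\<forall>b\<in>B. Complex (u b) (u (i b)) = 0"
      using ind[rule_format, of "\<lambda>b. Complex (u b) (u (i b))"] z[unfolded sum_R] by blast
    then have "\<forall>b\<in>B. u b = 0 \<and> u (i b) = 0" by (simp add: complex_eq_iff)
    then show "u v = 0" using v by (auto simp: R_def)
  qed
  have sE: "subspace E"
    using E unfolding subspace_def vec.subspace_def by (simp add: scaleR_cvec)
  have "span R = E"
  proof
    have "R \<subseteq> E" using B(1) E by (auto simp: R_def i_def vec.subspace_scale)
    then show "span R \<subseteq> E" using sE by (simp add: span_minimal)
  next
    show "E \<subseteq> span R"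
    proof
      fix x assume "x \<in> E"
      then have "x \<in> vec.span B" using B(3) by blast
      then obtain u where x: "x = (\<Sum>v\<in>B. u v *s v)" using vec.span_finite[OF fB] by blast
      have "x = (\<Sum>v\<in>B. Re (u v) *\<^sub>R v + Im (u v) *\<^sub>R i v)" unfolding x i_def
        by (simp add: csplit[of "u _"])
      also have "\<dots> \<in> span R"
        by (intro span_sum span_add span_scale span_base) (auto simp: R_def)
      finally show "x \<in> span R" .
    qed
  qed
  then have "dim E = card R" using indR dim_span_eq_card_independent by metis
  then show ?thesis using cR B(4) by simp
qed

definition cv :: "real^'n \<Rightarrow> real^'n \<Rightarrow> complex^'n" where
  "cv x y = (\<chi> i. Complex (x$i) (y$i))"
definition rev :: "complex^'n \<Rightarrow> real^'n" where "rev v = (\<chi> i. Re (v$i))"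
definition imv :: "complex^'n \<Rightarrow> real^'n" where "imv v = (\<chi> i. Im (v$i))"

lemma cv_reim: "cv (rev v) (imv v) = v"
  by (simp add: cv_def rev_def imv_def vec_eq_iff complex_eq_iff)

lemma cv_eq0: "cv x y = 0 \<longleftrightarrow> x = 0 \<and> y = 0"
  by (auto simp: cv_def vec_eq_iff complex_eq_iff)

lemma cv_inj: "cv x y = cv x' y' \<longleftrightarrow> x = x' \<and> y = y'"
  by (auto simp: cv_def vec_eq_iff complex_eq_iff)

lemma cmat_cv: "cmat A *v cv x y = cv (A *v x) (A *v y)"
  by (simp add: cv_def cmat_def matrix_vector_mult_def vec_eq_iff complex_eq_iff)

lemma scale_cv: "z *s cv x y = cv (Re z *\<^sub>R x - Im z *\<^sub>R y) (Im z *\<^sub>R x + Re z *\<^sub>R y)"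
  by (simp add: cv_def vec_eq_iff complex_eq_iff)

lemma cv_add: "cv (x + x') (y + y') = cv x y + cv x' y'"
  by (simp add: cv_def vec_eq_iff complex_eq_iff)

lemma cv_scaleR: "cv (r *\<^sub>R x) (r *\<^sub>R y) = r *\<^sub>R cv x y"
  by (simp add: cv_def vec_eq_iff complex_eq_iff)

lemma eig_iff: "cmat A *v cv x y = z *s cv x y \<longleftrightarrow>
   A *v x = Re z *\<^sub>R x - Im z *\<^sub>R y \<and> A *v y = Im z *\<^sub>R x + Re z *\<^sub>R y"
  by (simp add: cmat_cv scale_cv cv_inj)

context om begin

lemma FF_W: assumes "F (F x) = c *\<^sub>R F x - x" shows "x \<in> W c"
proof -
  have "FT (F (F x)) = FT (c *\<^sub>R F x - x)" using assms by simp
  then have "F x = c *\<^sub>R x - FT x" by (simp add: matrix_vector_mult_diff_distrib matrix_vector_mult_scaleR)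
  then show ?thesis by (simp add: W_def)
qed

lemma eigpair_W:
  assumes ex: "F x = a *\<^sub>R x - b *\<^sub>R y" and ey: "F y = b *\<^sub>R x + a *\<^sub>R y" and ab: "a*a + b*b = 1"
  shows "x \<in> W (2*a)" "y \<in> W (2*a)"
proof -
  have bb: "b * b = 1 - a * a" using ab by simp
  have "F (F x) = a *\<^sub>R F x - b *\<^sub>R F y"
    by (simp add: ex matrix_vector_mult_diff_distrib matrix_vector_mult_scaleR)
  also have "\<dots> = (2*a) *\<^sub>R F x - x"
    unfolding ex ey by (simp add: vec_eq_iff algebra_simps bb)
  finally show "x \<in> W (2*a)" by (rule FF_W)
  have "F (F y) = b *\<^sub>R F x + a *\<^sub>R F y"
    by (simp add: ey matrix_vector_right_distrib matrix_vector_mult_scaleR)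
  also have "\<dots> = (2*a) *\<^sub>R F y - y"
    unfolding ex ey by (simp add: vec_eq_iff algebra_simps bb)
  finally show "y \<in> W (2*a)" by (rule FF_W)
qed

lemma eigpair_norm:
  assumes ex: "F x = a *\<^sub>R x - b *\<^sub>R y" and ey: "F y = b *\<^sub>R x + a *\<^sub>R y"
  shows "(a*a + b*b) * (x \<bullet> x + y \<bullet> y) = x \<bullet> x + y \<bullet> y"
proof -
  have "x \<bullet> x + y \<bullet> y = F x \<bullet> F x + F y \<bullet> F y" by simp
  also have "\<dots> = (a*a + b*b) * (x \<bullet> x + y \<bullet> y)"
    unfolding ex ey by (simp add: inner_diff_left inner_diff_right inner_add_left inner_add_right
        inner_commute algebra_simps)
  finally show ?thesis by simp
qed

definition zeta :: "real \<Rightarrow> complex" where "zeta c = Complex (c/2) (bb c)"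

lemma zeta_inj: "inj zeta"
  by (rule injI) (simp add: zeta_def complex_eq_iff)

lemma eig_zeta: assumes c: "\<bar>c\<bar> < 2" and x: "x \<in> W c"
  shows "cmat f *v cv x (- J c x) = zeta c *s cv x (- J c x)"
proof -
  have "F x = (c/2) *\<^sub>R x - bb c *\<^sub>R (- J c x)" using F_J[OF c, of x] by simp
  moreover have "F (- J c x) = bb c *\<^sub>R x + (c/2) *\<^sub>R (- J c x)"
    using F_J[OF c, of "J c x"] J_J[OF c x] linear_neg[OF linF, of "J c x"] by simp
  ultimately show ?thesis by (simp add: eig_iff zeta_def)
qed

lemma nonreal_eq: "nonreal_eig_reps f = zeta ` {c\<in>cs. \<bar>c\<bar> < 2}"
proof safe
  fix z assume "z \<in> nonreal_eig_reps f"
  then obtain v where z: "Im z > 0" "v \<noteq> 0" "cmat f *v v = z *s v" by (auto simp: nonreal_eig_reps_def)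
  define x where "x = rev v"
  define y where "y = imv v"
  have v: "v = cv x y" by (simp add: x_def y_def cv_reim)
  have e: "F x = Re z *\<^sub>R x - Im z *\<^sub>R y" "F y = Im z *\<^sub>R x + Re z *\<^sub>R y"
    using z(3) unfolding v eig_iff by auto
  have nz: "x \<noteq> 0 \<or> y \<noteq> 0" using z(2) v cv_eq0 by auto
  then have pos: "x \<bullet> x + y \<bullet> y > 0"
    by (metis add_nonneg_pos add_pos_nonneg inner_gt_zero_iff inner_ge_zero)
  have ab: "Re z * Re z + Im z * Im z = 1" using eigpair_norm[OF e] pos by simp
  note W = eigpair_W[OF e ab]
  define c where "c = 2 * Re z"
  have "c \<in> cs" using W nz unfolding cs_def c_def by auto
  moreover have "\<bar>c\<bar> < 2"
  proof -
    have "Re z * Re z < 1" using ab z(1) by (smt (verit) mult_pos_pos)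
    then have "\<bar>Re z\<bar> < 1" by (simp add: abs_square_less_1[symmetric] power2_eq_square)
    then show ?thesis by (simp add: c_def)
  qed
  moreover have "z = zeta c"
  proof -
    have "1 - (c/2)^2 = Im z * Im z" using ab by (simp add: c_def power2_eq_square)
    then have "bb c = sqrt (Im z * Im z)" by (simp add: bb_def)
    also have "\<dots> = Im z" using z(1) by simp
    finally show ?thesis by (simp add: zeta_def c_def complex_eq_iff)
  qed
  ultimately show "z \<in> zeta ` {c \<in> cs. \<bar>c\<bar> < 2}" by blast
next
  fix c assume c: "c \<in> cs" "\<bar>c\<bar> < 2"
  obtain x where x: "x \<in> W c" "x \<noteq> 0" using c(1) W_sub subspace_0 unfolding cs_def by blast
  have "cv x (- J c x) \<noteq> 0" using x(2) cv_eq0 by blast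
  moreover have "Im (zeta c) > 0" using bb_pos[OF c(2)] by (simp add: zeta_def)
  ultimately show "zeta c \<in> nonreal_eig_reps f"
    using eig_zeta[OF c(2) x(1)] unfolding nonreal_eig_reps_def by blast
qed

lemma ceig_dim_zeta: assumes c: "\<bar>c\<bar> < 2" shows "2 * ceig_dim f (zeta c) = dim (W c)"
proof -
  define E where "E = {v :: complex^'n. cmat f *v v = zeta c *s v}"
  define \<phi> where "\<phi> x = cv x (- J c x)" for x
  have mvs: "cmat f *v (a *s v) = a *s (cmat f *v v)" for a v
    by (simp add: vec_eq_iff matrix_vector_mult_def sum_distrib_left mult.left_commute)
  have sub: "vec.subspace E" unfolding E_def vec.subspace_def
  proof (intro conjI ballI allI)
    show "0 \<in> {v. cmat f *v v = zeta c *s v}" by simp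
  next
    fix a v assume "v \<in> {v. cmat f *v v = zeta c *s v}"
    then show "a *s v \<in> {v. cmat f *v v = zeta c *s v}" by (simp add: mvs mult.commute)
  next
    fix v w assume "v \<in> {v. cmat f *v v = zeta c *s v}" "w \<in> {v. cmat f *v v = zeta c *s v}"
    then show "v + w \<in> {v. cmat f *v v = zeta c *s v}"
      by (simp add: matrix_vector_right_distrib vector_ssub_ldistrib)
  qed
  have "E = \<phi> ` W c"
  proof safe
    fix v assume "v \<in> E"
    define x where "x = rev v"
    define y where "y = imv v"
    have v: "v = cv x y" by (simp add: x_def y_def cv_reim)
    have e: "F x = (c/2) *\<^sub>R x - bb c *\<^sub>R y" "F y = bb c *\<^sub>R x + (c/2) *\<^sub>R y"
      using \<open>v \<in> E\<close> by (simp_all add: E_def v eig_iff zeta_def)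
    have ab: "(c/2) * (c/2) + bb c * bb c = 1" using bb_sq[OF c] by (simp add: power2_eq_square)
    have xW: "x \<in> W c" using eigpair_W(1)[OF e ab] by simp
    have "bb c *\<^sub>R J c x = bb c *\<^sub>R (- y)" using bJ[OF c, of x] e(1) by simp
    then have "J c x = - y" using bb_pos[OF c] by (metis less_irrefl scaleR_cancel_left)
    then have "v = \<phi> x" by (simp add: v \<phi>_def)
    then show "v \<in> \<phi> ` W c" using xW by blast
  next
    fix x assume "x \<in> W c"
    then show "\<phi> x \<in> E" using eig_zeta[OF c] by (simp add: E_def \<phi>_def)
  qed
  moreover have lin: "linear \<phi>"
  proof (rule linearI)
    fix x y show "\<phi> (x + y) = \<phi> x + \<phi> y"
      by (simp add: \<phi>_def linear_add[OF J_lin] cv_add[symmetric])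
  next
    fix r x show "\<phi> (r *\<^sub>R x) = r *\<^sub>R \<phi> x"
      by (simp add: \<phi>_def linear_scale[OF J_lin] cv_scaleR[symmetric])
  qed
  moreover have "inj \<phi>" by (rule injI) (simp add: \<phi>_def cv_inj)
  ultimately have "dim E = dim (W c)" using dim_image_eq[OF lin] by (metis inj_on_subset subset_UNIV)
  moreover have "dim E = 2 * vec.dim E" by (rule cdim[OF sub])
  ultimately show ?thesis by (simp add: ceig_dim_def E_def)
qed

lemma pm1_eq: "pm1_eigs f = (\<lambda>c. c/2) ` {c\<in>cs. \<not> \<bar>c\<bar> < 2}"
proof -
  have e: "{v. f *v v = e *s v} = W (2*e)" if "e = 1 \<or> e = -1" for e
    using that by (auto simp: W_2 W_m2 scalar_mult_eq_scaleR)
  have "e \<in> pm1_eigs f \<longleftrightarrow> (e = 1 \<or> e = -1) \<and> 2*e \<in> cs" for e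
  proof -
    have "e \<in> pm1_eigs f \<longleftrightarrow> (e = 1 \<or> e = -1) \<and> (\<exists>v. v \<noteq> 0 \<and> v \<in> {v. f *v v = e *s v})"
      by (auto simp: pm1_eigs_def)
    also have "\<dots> \<longleftrightarrow> (e = 1 \<or> e = -1) \<and> 2*e \<in> cs"
      using e W_sub subspace_0 unfolding cs_def by blast
    finally show ?thesis .
  qed
  moreover have "c \<in> cs \<and> \<not> \<bar>c\<bar> < 2 \<longleftrightarrow> c \<in> cs \<and> (c = 2 \<or> c = -2)" for c
    using cs_bound by fastforce
  ultimately show ?thesis by (auto simp: image_iff)
qed

lemma reig_dim_eq: "c \<in> cs \<Longrightarrow> \<not> \<bar>c\<bar> < 2 \<Longrightarrow> reig_dim f (c/2) = dim (W c)"
proof -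
  assume c: "c \<in> cs" "\<not> \<bar>c\<bar> < 2"
  then have "c = 2 \<or> c = -2" using cs_bound by fastforce
  then have "{v. f *v v = (c/2) *s v} = W c" by (auto simp: W_2 W_m2 scalar_mult_eq_scaleR)
  then show ?thesis by (simp add: reig_dim_def dim_vec_eq)
qed

lemma segre_eq: "segre f = (image_mset (\<lambda>c. dim (W c) div 2) (mset_set {c\<in>cs. \<bar>c\<bar> < 2}),
                            image_mset (\<lambda>c. dim (W c)) (mset_set {c\<in>cs. \<not> \<bar>c\<bar> < 2}))"
proof -
  have i2: "inj_on (\<lambda>c::real. c/2) A" for A by (rule inj_onI) simp
  have "image_mset (ceig_dim f) (mset_set (nonreal_eig_reps f)) =
        image_mset (ceig_dim f) (image_mset zeta (mset_set {c\<in>cs. \<bar>c\<bar> < 2}))"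
    unfolding nonreal_eq using zeta_inj by (simp add: image_mset_mset_set inj_on_subset)
  also have "\<dots> = image_mset (\<lambda>c. dim (W c) div 2) (mset_set {c\<in>cs. \<bar>c\<bar> < 2})"
    unfolding multiset.map_comp
  proof (rule image_mset_cong)
    fix c assume "c \<in># mset_set {c\<in>cs. \<bar>c\<bar> < 2}"
    then have "\<bar>c\<bar> < 2" using finite_cs by simp
    then show "(ceig_dim f \<circ> zeta) c = dim (W c) div 2" using ceig_dim_zeta by fastforce
  qed
  moreover have "image_mset (reig_dim f) (mset_set (pm1_eigs f)) =
        image_mset (reig_dim f) (image_mset (\<lambda>c. c/2) (mset_set {c\<in>cs. \<not> \<bar>c\<bar> < 2}))"
    unfolding pm1_eq using i2 by (simp add: image_mset_mset_set)
  moreover have "\<dots> = image_mset (\<lambda>c. dim (W c)) (mset_set {c\<in>cs. \<not> \<bar>c\<bar> < 2})"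
    unfolding multiset.map_comp
  proof (rule image_mset_cong)
    fix c assume "c \<in># mset_set {c\<in>cs. \<not> \<bar>c\<bar> < 2}"
    then have "c \<in> cs" "\<not> \<bar>c\<bar> < 2" using finite_cs by auto
    then show "(reig_dim f \<circ> (\<lambda>c. c/2)) c = dim (W c)" using reig_dim_eq by simp
  qed
  ultimately show ?thesis by (simp add: segre_def)
qed

lemma dim_even: "\<bar>c\<bar> < 2 \<Longrightarrow> even (dim (W c))"
  using ceig_dim_zeta by (metis dvd_triv_left)

end

lemma mset_bij:
  assumes "finite A" "finite B" "image_mset \<phi> (mset_set A) = image_mset \<psi> (mset_set B)"
  shows "\<exists>\<tau>. bij_betw \<tau> A B \<and> (\<forall>a\<in>A. \<psi> (\<tau> a) = \<phi> a)"
  using assms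
proof (induction A arbitrary: B rule: finite_induct)
  case empty
  then have "B = {}" by (metis image_mset_is_empty_iff mset_set.infinite mset_set_empty_iff mset_set.empty)
  then show ?case by (auto simp: bij_betw_def)
next
  case (insert a A)
  have "image_mset \<phi> (mset_set (insert a A)) = add_mset (\<phi> a) (image_mset \<phi> (mset_set A))"
    using insert by simp
  then have "\<phi> a \<in># image_mset \<psi> (mset_set B)" using insert(5) by simp
  then obtain b where b: "b \<in> B" "\<psi> b = \<phi> a" using insert(4) by auto
  have "mset_set B = add_mset b (mset_set (B - {b}))" using b(1) insert(4) by (simp add: mset_set.remove)
  then have "image_mset \<psi> (mset_set B) = add_mset (\<phi> a) (image_mset \<psi> (mset_set (B - {b})))"
    using b by simp
  then have "image_mset \<phi> (mset_set A) = image_mset \<psi> (mset_set (B - {b}))"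
    using insert(5) insert by simp
  then obtain \<tau> where t: "bij_betw \<tau> A (B - {b})" "\<forall>a\<in>A. \<psi> (\<tau> a) = \<phi> a"
    using insert.IH[of "B - {b}"] insert(4) by blast
  define \<tau>' where "\<tau>' = \<tau>(a := b)"
  have "bij_betw \<tau>' A (B - {b}) \<longleftrightarrow> bij_betw \<tau> A (B - {b})"
    unfolding \<tau>'_def by (rule bij_betw_cong) (use insert(2) in auto)
  then have "bij_betw \<tau>' A (B - {b})" using t(1) by simp
  moreover have "bij_betw \<tau>' {a} {b}" by (simp add: \<tau>'_def bij_betw_def)
  ultimately have "bij_betw \<tau>' (A \<union> {a}) ((B - {b}) \<union> {b})"
    by (rule bij_betw_combine) simp
  moreover have "A \<union> {a} = insert a A" "(B - {b}) \<union> {b} = B" using b(1) by auto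
  ultimately have "bij_betw \<tau>' (insert a A) B" by simp
  moreover have "\<forall>x\<in>insert a A. \<psi> (\<tau>' x) = \<phi> x" using t(2) b(2) insert(2) by (auto simp: \<tau>'_def)
  ultimately show ?case by blast
qed

lemma bij_mset_eq:
  assumes "bij_betw \<sigma> A B" "\<And>a. a \<in> A \<Longrightarrow> \<psi> (\<sigma> a) = \<phi> a"
  shows "image_mset \<phi> (mset_set A) = image_mset \<psi> (mset_set B)"
proof -
  have "mset_set B = image_mset \<sigma> (mset_set A)"
    using assms(1) by (simp add: bij_betw_def image_mset_mset_set)
  then have "image_mset \<psi> (mset_set B) = image_mset (\<psi> \<circ> \<sigma>) (mset_set A)" by (simp add: multiset.map_comp)
  also have "\<dots> = image_mset \<phi> (mset_set A)"
  proof (rule image_mset_cong)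
    fix x assume "x \<in># mset_set A"
    then have "x \<in> A" by (cases "finite A") auto
    then show "(\<psi> \<circ> \<sigma>) x = \<phi> x" using assms(2) by simp
  qed
  finally show ?thesis by simp
qed

lemma bij_restrict:
  assumes "bij_betw \<sigma> A B" "\<And>a. a \<in> A \<Longrightarrow> P a \<longleftrightarrow> Q (\<sigma> a)"
  shows "bij_betw \<sigma> {a\<in>A. P a} {b\<in>B. Q b}"
  using assms unfolding bij_betw_def inj_on_def by (auto simp: image_iff)

lemma segre_blk:
  fixes f g :: "real^'n^'n"
  assumes f: "orthogonal_matrix f" and g: "orthogonal_matrix g"
  shows "segre f = segre g \<longleftrightarrow> blk_equiv f g"
proof -
  interpret f: om f by unfold_locales (rule f)
  interpret g: om g by unfold_locales (rule g)
  let ?CXf = "{c\<in>f.cs. \<bar>c\<bar> < 2}" and ?RLf = "{c\<in>f.cs. \<not> \<bar>c\<bar> < 2}"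
  let ?CXg = "{c\<in>g.cs. \<bar>c\<bar> < 2}" and ?RLg = "{c\<in>g.cs. \<not> \<bar>c\<bar> < 2}"
  show ?thesis
  proof
    assume eq: "segre f = segre g"
    have m1: "image_mset (\<lambda>c. dim (f.W c) div 2) (mset_set ?CXf) = image_mset (\<lambda>c. dim (g.W c) div 2) (mset_set ?CXg)"
      and m2: "image_mset (\<lambda>c. dim (f.W c)) (mset_set ?RLf) = image_mset (\<lambda>c. dim (g.W c)) (mset_set ?RLg)"
      using eq unfolding f.segre_eq g.segre_eq by auto
    obtain t1 where t1: "bij_betw t1 ?CXf ?CXg" "\<forall>c\<in>?CXf. dim (g.W (t1 c)) div 2 = dim (f.W c) div 2"
      using mset_bij[OF _ _ m1] f.finite_cs g.finite_cs by auto
    obtain t2 where t2: "bij_betw t2 ?RLf ?RLg" "\<forall>c\<in>?RLf. dim (g.W (t2 c)) = dim (f.W c)"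
      using mset_bij[OF _ _ m2] f.finite_cs g.finite_cs by auto
    define \<sigma> where "\<sigma> c = (if \<bar>c\<bar> < 2 then t1 c else t2 c)" for c
    have b1: "bij_betw \<sigma> ?CXf ?CXg" using t1(1) by (rule bij_betw_cong[THEN iffD1, rotated]) (simp add: \<sigma>_def)
    have b2: "bij_betw \<sigma> ?RLf ?RLg" using t2(1) by (rule bij_betw_cong[THEN iffD1, rotated]) (simp add: \<sigma>_def)
    have "bij_betw \<sigma> (?CXf \<union> ?RLf) (?CXg \<union> ?RLg)" using b1 b2 by (rule bij_betw_combine) auto
    moreover have "?CXf \<union> ?RLf = f.cs" "?CXg \<union> ?RLg = g.cs" by auto
    ultimately have bij: "bij_betw \<sigma> f.cs g.cs" by simp
    have "dim (f.W c) = dim (g.W (\<sigma> c)) \<and> (\<bar>c\<bar> < 2 \<longleftrightarrow> \<bar>\<sigma> c\<bar> < 2)" if c: "c \<in> f.cs" for c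
    proof (cases "\<bar>c\<bar> < 2")
      case True
      then have in1: "c \<in> ?CXf" using c by simp
      then have "t1 c \<in> ?CXg" using bij_betwE[OF t1(1)] by blast
      then have ev: "even (dim (g.W (t1 c)))" "\<bar>t1 c\<bar> < 2" using g.dim_even by auto
      have "even (dim (f.W c))" using f.dim_even True by simp
      then have "dim (g.W (t1 c)) = dim (f.W c)" using t1(2) in1 ev(1) by (metis dvd_div_mult_self)
      then show ?thesis using True ev(2) by (simp add: \<sigma>_def)
    next
      case False
      then have in2: "c \<in> ?RLf" using c by simp
      then have "t2 c \<in> ?RLg" using bij_betwE[OF t2(1)] by blast
      then show ?thesis using t2(2) in2 False by (simp add: \<sigma>_def)
    qed
    then show "blk_equiv f g" unfolding blk_equiv_def using bij by blast
  next
    assume "blk_equiv f g"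
    then obtain \<sigma> where s: "bij_betw \<sigma> f.cs g.cs"
      "\<forall>c\<in>f.cs. dim (f.W c) = dim (g.W (\<sigma> c)) \<and> (\<bar>c\<bar> < 2 \<longleftrightarrow> \<bar>\<sigma> c\<bar> < 2)"
      unfolding blk_equiv_def by blast
    have b1: "bij_betw \<sigma> ?CXf ?CXg" using s by (intro bij_restrict) auto
    have b2: "bij_betw \<sigma> ?RLf ?RLg" using s by (intro bij_restrict) auto
    have "image_mset (\<lambda>c. dim (f.W c) div 2) (mset_set ?CXf) = image_mset (\<lambda>c. dim (g.W c) div 2) (mset_set ?CXg)"
      using s(2) by (intro bij_mset_eq[OF b1]) auto
    moreover have "image_mset (\<lambda>c. dim (f.W c)) (mset_set ?RLf) = image_mset (\<lambda>c. dim (g.W c)) (mset_set ?RLg)"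
      using s(2) by (intro bij_mset_eq[OF b2]) auto
    ultimately show "segre f = segre g" unfolding f.segre_eq g.segre_eq by simp
  qed
qed

theorem mainTheorem1:
  fixes f g :: "real^'n^'n"
  assumes "CARD('n) \<ge> 2"
    and "f \<in> orth_group" and "g \<in> orth_group"
  shows "segre f = segre g \<longleftrightarrow>
         (\<exists>k \<in> orth_group. (\<lambda>h. k ** h ** matrix_inv k) ` centralizer_O f = centralizer_O g)"
proof -
  have f: "orthogonal_matrix f" and g: "orthogonal_matrix g" using assms by (auto simp: orth_group_def)
  show ?thesis
  proof
    assume "segre f = segre g"
    then have "blk_equiv f g" using segre_blk[OF f g] by simp
    then show "\<exists>k \<in> orth_group. (\<lambda>h. k ** h ** matrix_inv k) ` centralizer_O f = centralizer_O g"
      using blk_imp_cent_conj[OF f g] by (auto simp: orth_group_def)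
  next
    assume "\<exists>k \<in> orth_group. (\<lambda>h. k ** h ** matrix_inv k) ` centralizer_O f = centralizer_O g"
    then obtain k where k: "orthogonal_matrix k" "(\<lambda>h. k ** h ** matrix_inv k) ` centralizer_O f = centralizer_O g"
      by (auto simp: orth_group_def)
    then have "blk_equiv f g" using cent_conj_imp_blk[OF f g] by blast
    then show "segre f = segre g" using segre_blk[OF f g] by simp
  qed
qed

end
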